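(* Fix an integer $n\ge 2$ and let $p(x)=\sum_{k\ge0}p_kx^k$, where $p_k$ is the probability that a uniformly random permutation in $S_k$ has an $n$-th root. Define $$q_1(x)=\exp\Big(\sum_{r\ge1,\ \gcd(r,n)=1}\frac{x^r}{r}\Big),\qquad q_2(x)=\exp\Big(\sum_{r\ge1,\ \gcd(r,n)>1}\frac{x^{r\,d_n(r)}}{r^2}\Big).$$ Then (i) $p(x)\preceq q_1(x)q_2(x)$ coefficientwise; (ii) the coefficients of $q_2$ are $O(m^{-2})$ as $m\to\infty$; and (iii) $q_1(x)=\prod_{d\mid n}(1-x^d)^{-\mu(d)/d}$ as formal power series, where $\mu$ is the Möbius function.
   Context: For power series $f,g$ with real coefficients, $f\preceq g$ means every coefficient of $f$ is at most the corresponding coefficient of $g$. For positive integers $n,r$, $d_n(r)$ denotes the smallest positive divisor $d$ of $n$ such that $\gcd(r,n/d)=1$; equivalently $d_n(r)=\prod_{p\mid r,\,p\text{ prime}}p^{v_p(n)}$. *)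

theory Defs
  imports Complex_Main "HOL-Combinatorics.Permutations"
    "HOL-Computational_Algebra.Formal_Power_Series" "HOL-Computational_Algebra.Squarefree"
    "HOL-Library.Landau_Symbols"
begin

definition fps_le :: "real fps \<Rightarrow> real fps \<Rightarrow> bool" (infix \<open>\<preceq>\<^sub>f\<close> 50) where
  "f \<preceq>\<^sub>f g \<longleftrightarrow> (\<forall>k. fps_nth f k \<le> fps_nth g k)"

definition dn :: "nat \<Rightarrow> nat \<Rightarrow> nat" where
  "dn n r = (LEAST d. 0 < d \<and> d dvd n \<and> coprime r (n div d))"

definition moebius_mu :: "nat \<Rightarrow> int" where
  "moebius_mu m = (if m = 0 then 0 else if squarefree m then (-1) ^ card (prime_factors m) else 0)"

definition perms_with_root :: "nat \<Rightarrow> nat \<Rightarrow> (nat \<Rightarrow> nat) set" where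
  "perms_with_root n k = {\<pi>. \<pi> permutes {..<k} \<and> (\<exists>\<sigma>. \<sigma> permutes {..<k} \<and> \<sigma> ^^ n = \<pi>)}"

definition p_series :: "nat \<Rightarrow> real fps" where
  "p_series n = Abs_fps (\<lambda>k. real (card (perms_with_root n k)) / fact k)"

(* exp of a power series with zero constant term *)
definition fps_exp_of :: "real fps \<Rightarrow> real fps" where
  "fps_exp_of f = fps_exp 1 oo f"

definition q1 :: "nat \<Rightarrow> real fps" where
  "q1 n = fps_exp_of (Abs_fps (\<lambda>r. if r \<ge> 1 \<and> coprime r n then 1 / real r else 0))"

(* sum_{r>=1, gcd(r,n)>1} x^(r d_n(r)) / r^2, coefficient of x^m collected *)
definition q2 :: "nat \<Rightarrow> real fps" where
  "q2 n = fps_exp_of (Abs_fps (\<lambda>m. \<Sum>r\<in>{r. 1 \<le> r \<and> r \<le> m \<and> gcd r n > 1 \<and> r * dn n r = m}. 1 / (real r)^2))"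

definition fps_one_minus_Xpow_powr :: "nat \<Rightarrow> real \<Rightarrow> real fps" where
  "fps_one_minus_Xpow_powr d a = fps_binomial a oo (- (fps_X ^ d))"

end

theory Submission
  imports Defs "HOL-Combinatorics.Orbits" "HOL-Combinatorics.Multiset_Permutations"
begin


lemma perm_of_permutes: "f permutes S \<Longrightarrow> finite S \<Longrightarrow> permutation f"
  using permutation_permutes by blast

lemma self_orbit: "f permutes S \<Longrightarrow> finite S \<Longrightarrow> x \<in> orbit f x"
  by (rule permutation_self_in_orbit[OF perm_of_permutes])

lemma orbit_same: "f permutes S \<Longrightarrow> finite S \<Longrightarrow> y \<in> orbit f x \<Longrightarrow> orbit f y = orbit f x"
  by (metis cyclic_on_orbit orbit_cyclic_eq3)

lemma orbit_finite: "f permutes S \<Longrightarrow> finite S \<Longrightarrow> finite (orbit f x)"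
  by (meson finite_orbit self_orbit)

lemma orbit_card_pos: "f permutes S \<Longrightarrow> finite S \<Longrightarrow> card (orbit f x) > 0"
  by (metis card_gt_0_iff empty_iff orbit_finite self_orbit)

lemma orbit_in_S: "f permutes S \<Longrightarrow> x \<in> S \<Longrightarrow> orbit f x \<subseteq> S"
  by (rule permutes_orbit_subset)

lemma orbit_outside: "f permutes S \<Longrightarrow> x \<notin> S \<Longrightarrow> orbit f x = {x}"
  by (simp add: orbit_eq_singleton_iff permutes_not_in)

lemma orbit_period:
  assumes "f permutes S" "finite S"
  shows "(f ^^ m) x = x \<longleftrightarrow> card (orbit f x) dvd m"
proof -
  have xo: "x \<in> orbit f x" using assms by (rule self_orbit)
  define L where "L = funpow_dist1 f x x"
  have oL: "orbit f x = (\<lambda>n. (f ^^ n) x) ` {0..<L}"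
    unfolding L_def by (rule orbit_conv_funpow_dist1[OF xo])
  have inj: "inj_on (\<lambda>n. (f ^^ n) x) {0..<L}"
    unfolding L_def by (rule inj_on_funpow_dist1[OF xo])
  have cL: "card (orbit f x) = L" using oL inj by (simp add: card_image)
  have fL: "(f ^^ L) x = x" unfolding L_def by (rule funpow_dist1_prop[OF xo])
  have Lpos: "L > 0" unfolding L_def by simp
  have mm: "(f ^^ (m mod L)) x = (f ^^ m) x" using funpow_mod_eq[OF fL] by simp
  show ?thesis
  proof
    assume "(f ^^ m) x = x"
    then have "(f ^^ (m mod L)) x = x" using mm by simp
    moreover have "m mod L < L" using Lpos by simp
    ultimately have "m mod L = 0"
      using funpow_dist1_least[of "m mod L" f x x] unfolding L_def by (metis neq0_conv)
    then show "card (orbit f x) dvd m" using cL by auto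
  next
    assume "card (orbit f x) dvd m"
    then have "m mod L = 0" using cL by auto
    then show "(f ^^ m) x = x" using mm by simp
  qed
qed

lemma orbit_pow_in: "y \<in> orbit f x \<Longrightarrow> (f ^^ k) y \<in> orbit f x"
  by (rule funpow_in_orbit)

lemma orbit_altdef_perm: "f permutes S \<Longrightarrow> finite S \<Longrightarrow> orbit f x = {(f ^^ n) x | n. True}"
  by (rule orbit_altdef_permutation[OF perm_of_permutes])

locale invsub =
  fixes f :: "'a \<Rightarrow> 'a" and S T :: "'a set"
  assumes perm: "f permutes S" and fin: "finite S" and sub: "T \<subseteq> S"
    and inv: "\<And>x. x \<in> T \<Longrightarrow> f x \<in> T"
begin

lemma finT: "finite T" using fin sub finite_subset by blast

lemma img: "f ` T = T"
proof -
  have "inj_on f T" using perm by (meson permutes_inj inj_on_subset subset_UNIV)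
  moreover have "f ` T \<subseteq> T" using inv by blast
  ultimately show ?thesis using finT by (simp add: endo_inj_surj)
qed

lemma restr_permutes: "perm_restrict f T permutes T"
proof (rule bij_imp_permutes)
  have "inj_on f T" using perm by (meson permutes_inj inj_on_subset subset_UNIV)
  then have "bij_betw f T T" using img by (simp add: bij_betw_def)
  then show "bij_betw (perm_restrict f T) T T"
    by (rule bij_betw_cong[THEN iffD1, rotated]) (simp add: perm_restrict_def)
  show "\<And>x. x \<notin> T \<Longrightarrow> perm_restrict f T x = x" by (simp add: perm_restrict_def)
qed

lemma restr_orbit: "x \<in> T \<Longrightarrow> orbit (perm_restrict f T) x = orbit f x"
  by (rule orbit_cong0[of x T]) (auto simp: perm_restrict_def inv)

lemma orbit_sub: "x \<in> T \<Longrightarrow> orbit f x \<subseteq> T"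
  using restr_orbit orbit_in_S[OF restr_permutes] by blast

lemma inv_compl: "x \<in> S - T \<Longrightarrow> f x \<in> S - T"
proof -
  assume x: "x \<in> S - T"
  have "f x \<in> S" using x perm by (simp add: permutes_in_image)
  moreover have "f x \<notin> T"
  proof
    assume "f x \<in> T"
    then obtain y where "y \<in> T" "f y = f x" using img by (metis imageE)
    then have "y = x" using perm by (metis permutes_inj injD)
    then show False using x \<open>y \<in> T\<close> by simp
  qed
  ultimately show ?thesis by simp
qed

lemma compl: "invsub f S (S - T)"
  using perm fin inv_compl by unfold_locales auto

lemma pow_in: "x \<in> T \<Longrightarrow> (f ^^ k) x \<in> T"
  by (induction k) (auto simp: inv)

lemma restr_pow: "(perm_restrict f T ^^ k) x = (if x \<in> T then (f ^^ k) x else x)"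
proof (induction k)
  case 0 then show ?case by simp
next
  case (Suc k)
  then show ?case using pow_in[of x k] by (simp add: perm_restrict_def)
qed

end

lemma orbit_sub_restrict_T:
  assumes "f permutes S" "finite S" "T \<subseteq> S" "\<And>x. x \<in> T \<Longrightarrow> f x \<in> T"
  shows "invsub f S T" using assms by unfold_locales


definition orbs :: "('a \<Rightarrow> 'a) \<Rightarrow> 'a set \<Rightarrow> nat \<Rightarrow> 'a set set" where
  "orbs f S r = {orbit f x | x. x \<in> S \<and> card (orbit f x) = r}"

definition cnt :: "('a \<Rightarrow> 'a) \<Rightarrow> 'a set \<Rightarrow> nat \<Rightarrow> nat" where
  "cnt f S r = card (orbs f S r)"

definition good :: "nat \<Rightarrow> 'a set \<Rightarrow> ('a \<Rightarrow> 'a) \<Rightarrow> bool" where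
  "good n S f \<longleftrightarrow> f permutes S \<and> (\<forall>r. dn n r dvd cnt f S r)"

definition blk :: "nat \<Rightarrow> 'a set \<Rightarrow> ('a \<Rightarrow> 'a) \<Rightarrow> bool" where
  "blk n B f \<longleftrightarrow> f permutes B \<and> (\<exists>r. (\<forall>x\<in>B. card (orbit f x) = r) \<and> card B = r * dn n r)"

lemma orbit_disj:
  assumes "f permutes S" "finite S" "orbit f x \<noteq> orbit f y"
  shows "orbit f x \<inter> orbit f y = {}"
proof (rule ccontr)
  assume "orbit f x \<inter> orbit f y \<noteq> {}"
  then obtain z where z: "z \<in> orbit f x" "z \<in> orbit f y" by blast
  have "orbit f z = orbit f x" using orbit_same[OF assms(1,2) z(1)] .
  moreover have "orbit f z = orbit f y" using orbit_same[OF assms(1,2) z(2)] .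
  ultimately show False using assms(3) by simp
qed

lemma orbs_sub: "f permutes S \<Longrightarrow> orbs f S r \<subseteq> Pow S"
  unfolding orbs_def using orbit_in_S[of f S] by auto

lemma finite_orbs: "f permutes S \<Longrightarrow> finite S \<Longrightarrow> finite (orbs f S r)"
  by (rule finite_subset[OF orbs_sub]) simp_all

context invsub begin

lemma orbs_restr: "orbs (perm_restrict f T) T r = {Q \<in> orbs f S r. Q \<subseteq> T}"
proof (intro set_eqI iffI)
  fix Q assume "Q \<in> orbs (perm_restrict f T) T r"
  then obtain x where x: "x \<in> T" "Q = orbit (perm_restrict f T) x" "card Q = r"
    unfolding orbs_def by blast
  then have Q: "Q = orbit f x" using restr_orbit by simp
  have "x \<in> S" using x(1) sub by blast
  then have "Q \<in> orbs f S r" unfolding orbs_def using Q x(3) by blast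
  moreover have "Q \<subseteq> T" using Q orbit_sub[OF x(1)] by simp
  ultimately show "Q \<in> {Q \<in> orbs f S r. Q \<subseteq> T}" by simp
next
  fix Q assume "Q \<in> {Q \<in> orbs f S r. Q \<subseteq> T}"
  then obtain x where x: "x \<in> S" "Q = orbit f x" "card Q = r" "Q \<subseteq> T"
    unfolding orbs_def by blast
  have "x \<in> Q" using x(2) self_orbit[OF perm fin] by simp
  then have xT: "x \<in> T" using x(4) by blast
  then have "Q = orbit (perm_restrict f T) x" "card (orbit (perm_restrict f T) x) = r"
    using x restr_orbit by auto
  then show "Q \<in> orbs (perm_restrict f T) T r"
    using xT unfolding orbs_def by blast
qed

lemma orbs_split:
  "orbs f S r = orbs (perm_restrict f T) T r \<union> orbs (perm_restrict f (S - T)) (S - T) r"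
proof -
  interpret C: invsub f S "S - T" by (rule compl)
  have "orbs f S r = {Q \<in> orbs f S r. Q \<subseteq> T} \<union> {Q \<in> orbs f S r. Q \<subseteq> S - T}"
  proof (intro set_eqI iffI)
    fix Q assume Q: "Q \<in> orbs f S r"
    then obtain x where x: "x \<in> S" "Q = orbit f x" unfolding orbs_def by blast
    show "Q \<in> {Q \<in> orbs f S r. Q \<subseteq> T} \<union> {Q \<in> orbs f S r. Q \<subseteq> S - T}"
    proof (cases "x \<in> T")
      case True
      then have "Q \<subseteq> T" using orbit_sub x(2) by simp
      then show ?thesis using Q by simp
    next
      case False
      then have "x \<in> S - T" using x(1) by simp
      then have "Q \<subseteq> S - T" using C.orbit_sub x(2) by simp
      then show ?thesis using Q by simp
    qed
  next
    fix Q assume "Q \<in> {Q \<in> orbs f S r. Q \<subseteq> T} \<union> {Q \<in> orbs f S r. Q \<subseteq> S - T}"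
    then show "Q \<in> orbs f S r" by blast
  qed
  then show ?thesis using orbs_restr C.orbs_restr by simp
qed

lemma orbs_disj:
  "orbs (perm_restrict f T) T r \<inter> orbs (perm_restrict f (S - T)) (S - T) r = {}"
proof -
  interpret C: invsub f S "S - T" by (rule compl)
  have "Q = {}" if "Q \<subseteq> T" "Q \<subseteq> S - T" for Q using that by blast
  moreover have "Q \<noteq> {}" if q: "Q \<in> orbs f S r" for Q
  proof -
    obtain x where "Q = orbit f x" using q unfolding orbs_def by blast
    then show ?thesis using orbit_nonempty by simp
  qed
  ultimately show ?thesis unfolding orbs_restr C.orbs_restr by auto
qed

lemma cnt_split:
  "cnt f S r = cnt (perm_restrict f T) T r + cnt (perm_restrict f (S - T)) (S - T) r"
proof -
  interpret C: invsub f S "S - T" by (rule compl)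
  have f1: "finite (orbs (perm_restrict f T) T r)"
    using finite_orbs[OF restr_permutes finT] .
  have f2: "finite (orbs (perm_restrict f (S - T)) (S - T) r)"
    using finite_orbs[OF C.restr_permutes C.finT] .
  show ?thesis unfolding cnt_def
    by (subst orbs_split) (rule card_Un_disjoint[OF f1 f2 orbs_disj])
qed

end

lemma dn_props:
  assumes "n > 0"
  shows "dn n r > 0" "dn n r dvd n" "coprime r (n div dn n r)"
proof -
  have ex: "0 < n \<and> n dvd n \<and> coprime r (n div n)" using assms by simp
  have "0 < dn n r \<and> dn n r dvd n \<and> coprime r (n div dn n r)"
    unfolding dn_def by (rule LeastI[where P="\<lambda>d. 0 < d \<and> d dvd n \<and> coprime r (n div d)" and k=n, OF ex])
  then show "dn n r > 0" "dn n r dvd n" "coprime r (n div dn n r)" by auto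
qed

lemma good_split:
  assumes g: "good n S f" and fin: "finite S" and a: "a \<in> S" and n: "n > 0"
  shows "\<exists>B. B \<subseteq> S \<and> a \<in> B \<and> blk n B (perm_restrict f B)
           \<and> good n (S - B) (perm_restrict f (S - B))"
proof -
  have perm: "f permutes S" using g unfolding good_def by simp
  define Q where "Q = orbit f a"
  define r where "r = card Q"
  define d where "d = dn n r"
  have d0: "d > 0" using dn_props[OF n] d_def by simp
  have Oin: "Q \<in> orbs f S r" unfolding orbs_def Q_def r_def using a by blast
  have fo: "finite (orbs f S r)" using finite_orbs[OF perm fin] .
  have cpos: "cnt f S r > 0" unfolding cnt_def using Oin fo card_gt_0_iff by blast
  have "d dvd cnt f S r" using g unfolding good_def d_def by simp
  then have dle: "d \<le> cnt f S r" using cpos by (simp add: dvd_imp_le)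
  have "d - 1 \<le> card (orbs f S r - {Q})"
    using dle Oin fo unfolding cnt_def by (simp add: card_Diff_singleton)
  then obtain Q' where Q': "Q' \<subseteq> orbs f S r - {Q}" "card Q' = d - 1" "finite Q'"
    by (meson obtain_subset_with_card_n)
  define QQ where "QQ = insert Q Q'"
  have QQsub: "QQ \<subseteq> orbs f S r" using Q' Oin QQ_def by blast
  have "Q \<notin> Q'" using Q'(1) by blast
  then have cQQ: "card QQ = d" using Q' d0 QQ_def by simp
  have fQQ: "finite QQ" using Q' QQ_def by simp
  define B where "B = \<Union>QQ"
  have QQchar: "\<And>P. P \<in> QQ \<Longrightarrow> \<exists>x\<in>S. P = orbit f x \<and> card P = r"
    using QQsub unfolding orbs_def by blast
  have BS: "B \<subseteq> S" using QQsub orbs_sub[OF perm] B_def by blast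
  have aB: "a \<in> B" unfolding B_def QQ_def Q_def using self_orbit[OF perm fin] by blast
  have Binv: "\<And>x. x \<in> B \<Longrightarrow> f x \<in> B"
  proof -
    fix x assume "x \<in> B"
    then obtain P where P: "P \<in> QQ" "x \<in> P" unfolding B_def by blast
    then obtain y where y: "P = orbit f y" using QQchar by blast
    then have "f x \<in> P" using P(2) by (simp add: orbit.step)
    then show "f x \<in> B" using P(1) unfolding B_def by blast
  qed
  interpret I: invsub f S B using perm fin BS Binv by unfold_locales
  have orbB: "\<And>x. x \<in> B \<Longrightarrow> orbit f x \<in> QQ"
  proof -
    fix x assume "x \<in> B"
    then obtain P where P: "P \<in> QQ" "x \<in> P" unfolding B_def by blast
    then obtain y where y: "P = orbit f y" using QQchar by blast
    then have "orbit f x = P" using orbit_same[OF perm fin, of x y] P(2) by simp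
    then show "orbit f x \<in> QQ" using P(1) by simp
  qed
  have cardB: "card B = r * d"
  proof -
    have "card B = sum card QQ"
      unfolding B_def
    proof (rule card_Union_disjoint)
      show "pairwise disjnt QQ"
        unfolding pairwise_def disjnt_def
      proof (intro ballI impI)
        fix P P' assume PP: "P \<in> QQ" "P' \<in> QQ" "P \<noteq> P'"
        obtain x where x: "P = orbit f x" using QQchar PP(1) by blast
        obtain y where y: "P' = orbit f y" using QQchar PP(2) by blast
        show "P \<inter> P' = {}" using orbit_disj[OF perm fin, of x y] x y PP(3) by simp
      qed
      show "\<And>P. P \<in> QQ \<Longrightarrow> finite P" using QQchar orbit_finite[OF perm fin] by blast
    qed
    also have "\<dots> = sum (\<lambda>_. r) QQ" using QQchar by (intro sum.cong) auto
    finally show ?thesis using cQQ by simp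
  qed
  have blkB: "blk n B (perm_restrict f B)"
    unfolding blk_def
  proof (intro conjI exI[of _ r])
    show "perm_restrict f B permutes B" by (rule I.restr_permutes)
    show "\<forall>x\<in>B. card (orbit (perm_restrict f B) x) = r"
    proof
      fix x assume x: "x \<in> B"
      have "orbit (perm_restrict f B) x = orbit f x" using I.restr_orbit[OF x] .
      moreover have "orbit f x \<in> QQ" using orbB[OF x] .
      ultimately show "card (orbit (perm_restrict f B) x) = r" using QQchar by force
    qed
    show "card B = r * dn n r" using cardB d_def by simp
  qed
  have orbsB: "\<And>r'. orbs (perm_restrict f B) B r' = (if r' = r then QQ else {})"
  proof -
    fix r'
    have "orbs (perm_restrict f B) B r' = {P \<in> orbs f S r'. P \<subseteq> B}" by (rule I.orbs_restr)
    also have "\<dots> = (if r' = r then QQ else {})"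
    proof (intro set_eqI iffI)
      fix P assume "P \<in> {P \<in> orbs f S r'. P \<subseteq> B}"
      then obtain x where x: "x \<in> S" "P = orbit f x" "card P = r'" "P \<subseteq> B"
        unfolding orbs_def by blast
      then have "x \<in> B" using self_orbit[OF perm fin] by blast
      then have "P \<in> QQ" using orbB x by simp
      then show "P \<in> (if r' = r then QQ else {})" using QQchar x by force
    next
      fix P assume "P \<in> (if r' = r then QQ else {})"
      then show "P \<in> {P \<in> orbs f S r'. P \<subseteq> B}"
        using QQsub B_def by (auto split: if_splits)
    qed
    finally show "orbs (perm_restrict f B) B r' = (if r' = r then QQ else {})" .
  qed
  have goodR: "good n (S - B) (perm_restrict f (S - B))"
    unfolding good_def
  proof (intro conjI allI)
    interpret C: invsub f S "S - B" by (rule I.compl)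
    show "perm_restrict f (S - B) permutes (S - B)" by (rule C.restr_permutes)
    fix r'
    have sp: "cnt f S r' = (if r' = r then d else 0) + cnt (perm_restrict f (S - B)) (S - B) r'"
      using I.cnt_split[of r'] orbsB[of r'] cQQ unfolding cnt_def by simp
    have "dn n r' dvd cnt f S r'" using g unfolding good_def by simp
    then show "dn n r' dvd cnt (perm_restrict f (S - B)) (S - B) r'"
      using sp d_def by (cases "r' = r") (auto simp: dvd_add_right_iff)
  qed
  show ?thesis using BS aB blkB goodR by blast
qed


lemma permutes_funpow: "f permutes S \<Longrightarrow> (f ^^ k) permutes S"
  by (induction k) (auto simp: permutes_id permutes_compose)

lemma orbit_enum:
  assumes "f permutes S" "finite S"
  shows "orbit f x = (\<lambda>i. (f ^^ i) x) ` {0..<card (orbit f x)}"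
    "inj_on (\<lambda>i. (f ^^ i) x) {0..<card (orbit f x)}"
proof -
  have xo: "x \<in> orbit f x" using assms by (rule self_orbit)
  define L where "L = funpow_dist1 f x x"
  have oL: "orbit f x = (\<lambda>n. (f ^^ n) x) ` {0..<L}"
    unfolding L_def by (rule orbit_conv_funpow_dist1[OF xo])
  have inj: "inj_on (\<lambda>n. (f ^^ n) x) {0..<L}"
    unfolding L_def by (rule inj_on_funpow_dist1[OF xo])
  have cL: "card (orbit f x) = L" using oL inj by (simp add: card_image)
  show "orbit f x = (\<lambda>i. (f ^^ i) x) ` {0..<card (orbit f x)}" using oL cL by simp
  show "inj_on (\<lambda>i. (f ^^ i) x) {0..<card (orbit f x)}" using inj cL by simp
qed

lemma split_count:
  assumes fin: "finite S" and P: "\<And>p. p \<in> P \<Longrightarrow> p permutes S" and fB: "finite BB"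
    and fX: "\<And>B. B \<in> BB \<Longrightarrow> finite (X B)" and fY: "\<And>B. B \<in> BB \<Longrightarrow> finite (Y B)"
    and ex: "\<And>p. p \<in> P \<Longrightarrow> \<exists>B\<in>BB. perm_restrict p B \<in> X B \<and> perm_restrict p (S - B) \<in> Y B"
  shows "card P \<le> (\<Sum>B\<in>BB. card (X B) * card (Y B))"
proof -
  define PB where "PB B = {p \<in> P. perm_restrict p B \<in> X B \<and> perm_restrict p (S - B) \<in> Y B}" for B
  have sub: "P \<subseteq> (\<Union>B\<in>BB. PB B)" using ex unfolding PB_def by blast
  have "P \<subseteq> {p. p permutes S}" using P by blast
  then have finP: "finite P"
    using finite_permutations[OF fin] by (rule finite_subset)
  have finPB: "\<And>B. finite (PB B)" using finP unfolding PB_def by simp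
  have "card P \<le> card (\<Union>B\<in>BB. PB B)"
    by (rule card_mono) (use fB finPB sub in auto)
  also have "\<dots> \<le> (\<Sum>B\<in>BB. card (PB B))" by (rule card_UN_le[OF fB])
  also have "\<dots> \<le> (\<Sum>B\<in>BB. card (X B) * card (Y B))"
  proof (rule sum_mono)
    fix B assume B: "B \<in> BB"
    have inj: "inj_on (\<lambda>p. (perm_restrict p B, perm_restrict p (S - B))) (PB B)"
    proof (rule inj_onI)
      fix p q assume pq: "p \<in> PB B" "q \<in> PB B"
        "(perm_restrict p B, perm_restrict p (S - B)) = (perm_restrict q B, perm_restrict q (S - B))"
      have pp: "p permutes S" "q permutes S" using pq(1,2) P unfolding PB_def by auto
      show "p = q"
      proof
        fix x
        show "p x = q x"
        proof (cases "x \<in> B")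
          case True
          have "perm_restrict p B x = perm_restrict q B x" using pq(3) by simp
          then show ?thesis using True by (simp add: perm_restrict_simps)
        next
          case False
          show ?thesis
          proof (cases "x \<in> S")
            case True
            then have xx: "x \<in> S - B" using False by simp
            have "perm_restrict p (S - B) x = perm_restrict q (S - B) x" using pq(3) by simp
            then show ?thesis using xx by (simp add: perm_restrict_simps)
          next
            case False
            then show ?thesis using pp by (simp add: permutes_not_in)
          qed
        qed
      qed
    qed
    have "card (PB B) \<le> card (X B \<times> Y B)"
      by (rule card_inj_on_le[OF inj]) (auto simp: PB_def fX[OF B] fY[OF B])
    then show "card (PB B) \<le> card (X B) * card (Y B)" by (simp add: card_cartesian_product)
  qed
  finally show ?thesis .
qed

lemma card_cycles:
  assumes finO: "finite O'" and a: "a \<in> O'"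
  shows "card {t. t permutes O' \<and> (\<forall>x\<in>O'. card (orbit t x) = card O')} \<le> fact (card O' - 1)"
proof -
  define r where "r = card O'"
  define CC where "CC = {t. t permutes O' \<and> (\<forall>x\<in>O'. card (orbit t x) = r)}"
  define phi where "phi t = map (\<lambda>i. (t ^^ i) a) [1..<r]" for t :: "'a \<Rightarrow> 'a"
  have r0: "r > 0" using finO a r_def card_gt_0_iff by blast
  have props: "orbit t a = O'" "(\<lambda>i. (t ^^ i) a) ` {0..<r} = O'" "inj_on (\<lambda>i. (t ^^ i) a) {0..<r}"
    "(t ^^ r) a = a" if t: "t \<in> CC" for t
  proof -
    have tp: "t permutes O'" and cr: "card (orbit t a) = r" using t a unfolding CC_def by auto
    have "orbit t a \<subseteq> O'" using orbit_in_S[OF tp a] .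
    then show oa: "orbit t a = O'" using card_subset_eq[OF finO] cr r_def by simp
    show "(\<lambda>i. (t ^^ i) a) ` {0..<r} = O'" using orbit_enum(1)[OF tp finO, of a] cr oa by simp
    show "inj_on (\<lambda>i. (t ^^ i) a) {0..<r}" using orbit_enum(2)[OF tp finO, of a] cr by simp
    show "(t ^^ r) a = a" using orbit_period[OF tp finO, of r a] cr by simp
  qed
  have into: "phi t \<in> permutations_of_set (O' - {a})" if t: "t \<in> CC" for t
  proof
    have inj1: "inj_on (\<lambda>i. (t ^^ i) a) {1..<r}"
      using props(3)[OF t] by (rule inj_on_subset) auto
    show "distinct (phi t)" unfolding phi_def distinct_map using inj1 by simp
    have "(\<lambda>i. (t ^^ i) a) ` {1..<r} = (\<lambda>i. (t ^^ i) a) ` {0..<r} - {(t ^^ 0) a}"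
    proof -
      have "{0..<r} = insert 0 {1..<r}" using r0 by auto
      moreover have "0 \<notin> {1..<r}" by simp
      ultimately show ?thesis using props(3)[OF t] by (simp add: inj_on_insert)
    qed
    then show "set (phi t) = O' - {a}" unfolding phi_def using props(2)[OF t] by simp
  qed
  have inj: "inj_on phi CC"
  proof (rule inj_onI)
    fix s t assume st: "s \<in> CC" "t \<in> CC" "phi s = phi t"
    have sp: "s permutes O'" and tp: "t permutes O'" using st unfolding CC_def by auto
    have ag1: "(s ^^ i) a = (t ^^ i) a" if "1 \<le> i" "i < r" for i
    proof -
      have "map (\<lambda>i. (s ^^ i) a) [1..<r] = map (\<lambda>i. (t ^^ i) a) [1..<r]"
        using st(3) unfolding phi_def .
      then show ?thesis using that by (simp add: map_eq_conv)
    qed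
    have ag: "(s ^^ i) a = (t ^^ i) a" if "i \<le> r" for i
    proof (cases "i = 0")
      case True then show ?thesis by simp
    next
      case False
      show ?thesis
      proof (cases "i = r")
        case True then show ?thesis using props(4)[OF st(1)] props(4)[OF st(2)] by simp
      next
        case False
        then show ?thesis using ag1 \<open>i \<noteq> 0\<close> that by simp
      qed
    qed
    show "s = t"
    proof
      fix x
      show "s x = t x"
      proof (cases "x \<in> O'")
        case True
        then obtain i where i: "i < r" "x = (s ^^ i) a" using props(2)[OF st(1)] by auto
        have "s x = (s ^^ Suc i) a" using i(2) by simp
        also have "\<dots> = (t ^^ Suc i) a" using ag[of "Suc i"] i(1) by simp
        also have "\<dots> = t ((t ^^ i) a)" by simp
        also have "(t ^^ i) a = x" using ag[of i] i by simp
        finally show ?thesis .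
      next
        case False
        then show ?thesis using sp tp by (simp add: permutes_not_in)
      qed
    qed
  qed
  have "card CC \<le> card (permutations_of_set (O' - {a}))"
    by (rule card_inj_on_le[OF inj]) (use into finO in auto)
  also have "\<dots> = fact (r - 1)" using finO a r_def by (simp add: card_permutations_of_set)
  finally show ?thesis unfolding CC_def r_def .
qed


definition cycr :: "nat \<Rightarrow> 'a set \<Rightarrow> ('a \<Rightarrow> 'a) set" where
  "cycr r B = {t. t permutes B \<and> (\<forall>x\<in>B. card (orbit t x) = r)}"

definition bco :: "nat \<Rightarrow> nat \<Rightarrow> real" where
  "bco n m = (if 1 \<le> m \<and> coprime m n then 1 / real m else 0)
     + (\<Sum>r\<in>{r. 1 \<le> r \<and> r \<le> m \<and> gcd r n > 1 \<and> r * dn n r = m}. 1 / (real r)^2)"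

lemma finite_cycr: assumes "finite B" shows "finite (cycr r B)"
proof -
  have "cycr r B \<subseteq> {p. p permutes B}" unfolding cycr_def by blast
  then show ?thesis using finite_permutations[OF \<open>finite B\<close>] by (rule finite_subset)
qed

lemma card_subsets_containing:
  assumes fin: "finite B" and a: "a \<in> B" and k: "k > 0"
  shows "card {Q. Q \<subseteq> B \<and> a \<in> Q \<and> card Q = k} = (card B - 1) choose (k - 1)"
proof -
  have "bij_betw (\<lambda>Q. Q - {a}) {Q. Q \<subseteq> B \<and> a \<in> Q \<and> card Q = k} {Q'. Q' \<subseteq> B - {a} \<and> card Q' = k - 1}"
  proof (rule bij_betw_byWitness[where f'="insert a"])
    show "\<forall>Q\<in>{Q. Q \<subseteq> B \<and> a \<in> Q \<and> card Q = k}. insert a (Q - {a}) = Q" by auto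
    show "\<forall>Q'\<in>{Q'. Q' \<subseteq> B - {a} \<and> card Q' = k - 1}. insert a Q' - {a} = Q'" by auto
    show "(\<lambda>Q. Q - {a}) ` {Q. Q \<subseteq> B \<and> a \<in> Q \<and> card Q = k} \<subseteq> {Q'. Q' \<subseteq> B - {a} \<and> card Q' = k - 1}"
    proof (rule image_subsetI)
      fix Q assume "Q \<in> {Q. Q \<subseteq> B \<and> a \<in> Q \<and> card Q = k}"
      then have Q: "Q \<subseteq> B" "a \<in> Q" "card Q = k" by auto
      have "finite Q" using Q(1) fin finite_subset by blast
      then have "card (Q - {a}) = k - 1" using Q by simp
      moreover have "Q - {a} \<subseteq> B - {a}" using Q by blast
      ultimately show "Q - {a} \<in> {Q'. Q' \<subseteq> B - {a} \<and> card Q' = k - 1}" by simp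
    qed
    show "insert a ` {Q'. Q' \<subseteq> B - {a} \<and> card Q' = k - 1} \<subseteq> {Q. Q \<subseteq> B \<and> a \<in> Q \<and> card Q = k}"
    proof (rule image_subsetI)
      fix Q' assume "Q' \<in> {Q'. Q' \<subseteq> B - {a} \<and> card Q' = k - 1}"
      then have Q': "Q' \<subseteq> B - {a}" "card Q' = k - 1" by auto
      have "finite Q'" using Q'(1) fin finite_subset by blast
      moreover have "a \<notin> Q'" using Q' by blast
      ultimately have "card (insert a Q') = k" using Q' k by simp
      moreover have "insert a Q' \<subseteq> B" using Q' a by blast
      ultimately show "insert a Q' \<in> {Q. Q \<subseteq> B \<and> a \<in> Q \<and> card Q = k}" by simp
    qed
  qed
  then have "card {Q. Q \<subseteq> B \<and> a \<in> Q \<and> card Q = k} = card {Q'. Q' \<subseteq> B - {a} \<and> card Q' = k - 1}"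
    by (rule bij_betw_same_card)
  also have "\<dots> = card (B - {a}) choose (k - 1)" using fin by (simp add: n_subsets)
  also have "card (B - {a}) = card B - 1" using a fin by simp
  finally show ?thesis .
qed

lemma cycr_bound:
  assumes "finite B" "r > 0"
  shows "real (card (cycr r B)) \<le> fact (card B) / real r ^ (card B div r)"
  using assms(1)
proof (induction "card B" arbitrary: B rule: less_induct)
  case less
  show ?case
  proof (cases "B = {}")
    case True
    have sub: "cycr r B \<subseteq> {id}" using True unfolding cycr_def by auto
    have "card (cycr r B) \<le> card {id::'a \<Rightarrow> 'a}" using card_mono[OF _ sub] by simp
    then show ?thesis using True by simp
  next
    case False
    then obtain a where a: "a \<in> B" by blast
    define m where "m = card B"
    show ?thesis
    proof (cases "r \<le> m")
      case False
      have "cycr r B = {}"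
      proof (rule ccontr)
        assume "cycr r B \<noteq> {}"
        then obtain t where t: "t \<in> cycr r B" by blast
        then have tp: "t permutes B" and cr: "card (orbit t a) = r" using a unfolding cycr_def by auto
        have "card (orbit t a) \<le> m" unfolding m_def
          by (rule card_mono[OF less.prems orbit_in_S[OF tp a]])
        then show False using cr False by simp
      qed
      then show ?thesis by simp
    next
      case True
      define BB where "BB = {Q. Q \<subseteq> B \<and> a \<in> Q \<and> card Q = r}"
      have finBB: "finite BB"
      proof -
        have "BB \<subseteq> Pow B" unfolding BB_def by blast
        then show ?thesis using less.prems by (simp add: finite_subset)
      qed
      have "card (cycr r B) \<le> (\<Sum>Q\<in>BB. card (cycr r Q) * card (cycr r (B - Q)))"
      proof (rule split_count[OF less.prems _ finBB])
        show "\<And>p. p \<in> cycr r B \<Longrightarrow> p permutes B" unfolding cycr_def by simp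
        show "finite (cycr r Q)" if "Q \<in> BB" for Q
        proof -
          have "finite Q" using that less.prems unfolding BB_def by (auto intro: finite_subset)
          then show ?thesis by (rule finite_cycr)
        qed
        show "finite (cycr r (B - Q))" if "Q \<in> BB" for Q
          using less.prems by (intro finite_cycr) simp
        fix p assume p: "p \<in> cycr r B"
        then have pp: "p permutes B" and pr: "\<forall>x\<in>B. card (orbit p x) = r" unfolding cycr_def by auto
        define Q where "Q = orbit p a"
        interpret I: invsub p B Q
        proof
          show "p permutes B" by (rule pp)
          show "finite B" by (rule less.prems)
          show "Q \<subseteq> B" unfolding Q_def by (rule orbit_in_S[OF pp a])
          show "\<And>x. x \<in> Q \<Longrightarrow> p x \<in> Q" unfolding Q_def by (rule orbit.step)
        qed
        interpret C: invsub p B "B - Q" by (rule I.compl)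
        have QBB: "Q \<in> BB" unfolding BB_def using I.sub self_orbit[OF pp less.prems, of a] pr a Q_def by auto
        have r1: "perm_restrict p Q \<in> cycr r Q"
          unfolding cycr_def using I.restr_permutes I.restr_orbit pr I.sub by auto
        have r2: "perm_restrict p (B - Q) \<in> cycr r (B - Q)"
          unfolding cycr_def using C.restr_permutes C.restr_orbit pr by auto
        show "\<exists>Q\<in>BB. perm_restrict p Q \<in> cycr r Q \<and> perm_restrict p (B - Q) \<in> cycr r (B - Q)"
          using QBB r1 r2 by blast
      qed
      then have "real (card (cycr r B)) \<le> real (\<Sum>Q\<in>BB. card (cycr r Q) * card (cycr r (B - Q)))"
        by (rule of_nat_mono)
      also have "\<dots> = (\<Sum>Q\<in>BB. real (card (cycr r Q)) * real (card (cycr r (B - Q))))" by simp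
      also have "\<dots> \<le> (\<Sum>Q\<in>BB. fact (r - 1) * (fact (m - r) / real r ^ ((m - r) div r)))"
      proof (rule sum_mono)
        fix Q assume Q: "Q \<in> BB"
        then have QB: "Q \<subseteq> B" and aQ: "a \<in> Q" and cQ: "card Q = r" unfolding BB_def by auto
        have fQ: "finite Q" using QB less.prems finite_subset by blast
        have c1: "card (cycr r Q) \<le> fact (r - 1)"
          using card_cycles[OF fQ aQ] cQ unfolding cycr_def by simp
        have cBQ: "card (B - Q) = m - r" using QB cQ fQ m_def by (simp add: card_Diff_subset)
        have "m - r < m" using True \<open>r > 0\<close> by simp
        then have lt: "card (B - Q) < card B" using cBQ m_def by simp
        have c2: "real (card (cycr r (B - Q))) \<le> fact (m - r) / real r ^ ((m - r) div r)"
          using less.hyps[OF lt] less.prems cBQ by simp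
        have c1': "real (card (cycr r Q)) \<le> fact (r - 1)"
        proof -
          have "real (card (cycr r Q)) \<le> real (fact (r - 1))" using c1 by (rule of_nat_mono)
          then show ?thesis by simp
        qed
        show "real (card (cycr r Q)) * real (card (cycr r (B - Q)))
              \<le> fact (r - 1) * (fact (m - r) / real r ^ ((m - r) div r))"
          by (rule mult_mono[OF c1' c2]) auto
      qed
      also have "\<dots> = real (card BB) * (fact (r - 1) * (fact (m - r) / real r ^ ((m - r) div r)))"
        by simp
      also have "card BB = (m - 1) choose (r - 1)"
        unfolding BB_def m_def by (rule card_subsets_containing[OF less.prems a \<open>r > 0\<close>])
      also have "real ((m - 1) choose (r - 1)) = fact (m - 1) / (fact (r - 1) * fact (m - r))"
        using True \<open>r > 0\<close> by (subst binomial_fact) (auto simp: Suc_diff_le)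
      also have "fact (m - 1) / (fact (r - 1) * fact (m - r)) * (fact (r - 1) * (fact (m - r) / real r ^ ((m - r) div r)))
          = fact (m - 1) / real r ^ ((m - r) div r)"
        by (simp add: field_simps)
      also have "\<dots> \<le> fact m / real r ^ (m div r)"
      proof -
        have "m div r = ((m - r) + r) div r" using True by simp
        also have "\<dots> = Suc ((m - r) div r)" using \<open>r > 0\<close> by simp
        finally have md: "m div r = Suc ((m - r) div r)" .
        have m0: "m > 0" using True \<open>r > 0\<close> by simp
        have fm: "(fact m :: real) = real m * fact (m - 1)" using m0 by (simp add: fact_reduce)
        have rp: "real r ^ ((m - r) div r) > 0" using \<open>r > 0\<close> by simp
        have "fact (m - 1) / real r ^ ((m - r) div r) = real r * fact (m - 1) / (real r * real r ^ ((m - r) div r))"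
          using \<open>r > 0\<close> by simp
        also have "\<dots> \<le> real m * fact (m - 1) / (real r * real r ^ ((m - r) div r))"
          using True rp \<open>r > 0\<close> by (intro divide_right_mono mult_right_mono) auto
        finally show ?thesis using md fm by simp
      qed
      finally show ?thesis unfolding m_def .
    qed
  qed
qed


lemma dn_one: assumes n: "n > 0" shows "dn n r = 1 \<longleftrightarrow> coprime r n"
proof
  assume "dn n r = 1" then show "coprime r n" using dn_props(3)[OF n, of r] by simp
next
  assume c: "coprime r n"
  have "dn n r \<le> 1" unfolding dn_def by (rule Least_le) (use c in simp)
  then show "dn n r = 1" using dn_props(1)[OF n, of r] by simp
qed

lemma blk_bound:
  assumes fin: "finite B" and ne: "B \<noteq> {}" and n: "n > 0"
  shows "real (card {t. blk n B t}) \<le> fact (card B) * bco n (card B)"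
proof -
  define m where "m = card B"
  have m0: "m > 0" using fin ne m_def by (simp add: card_gt_0_iff)
  define R where "R = {r. 1 \<le> r \<and> r \<le> m \<and> r * dn n r = m}"
  have finR: "finite R"
  proof -
    have "R \<subseteq> {1..m}" unfolding R_def by auto
    then show ?thesis by (rule finite_subset) simp
  qed
  have sub: "{t. blk n B t} \<subseteq> (\<Union>r\<in>R. cycr r B)"
  proof
    fix t assume "t \<in> {t. blk n B t}"
    then obtain r where tp: "t permutes B" and all: "\<forall>x\<in>B. card (orbit t x) = r"
      and cB: "m = r * dn n r" unfolding blk_def m_def by auto
    obtain x where x: "x \<in> B" using ne by blast
    have r0: "r > 0" using orbit_card_pos[OF tp fin, of x] all x by simp
    have "dn n r \<ge> 1" using dn_props(1)[OF n, of r] by simp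
    then have "r \<le> m" using cB by (metis mult_le_mono2 nat_mult_1_right)
    then have "r \<in> R" unfolding R_def using r0 cB by simp
    moreover have "t \<in> cycr r B" unfolding cycr_def using tp all by simp
    ultimately show "t \<in> (\<Union>r\<in>R. cycr r B)" by blast
  qed
  have "card {t. blk n B t} \<le> card (\<Union>r\<in>R. cycr r B)"
    by (rule card_mono[OF _ sub]) (use finR finite_cycr[OF fin] in blast)
  also have "\<dots> \<le> (\<Sum>r\<in>R. card (cycr r B))" by (rule card_UN_le[OF finR])
  finally have "real (card {t. blk n B t}) \<le> real (\<Sum>r\<in>R. card (cycr r B))" by (rule of_nat_mono)
  also have "\<dots> = (\<Sum>r\<in>R. real (card (cycr r B)))" by simp
  also have "\<dots> \<le> (\<Sum>r\<in>R. fact m / real r ^ dn n r)"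
  proof (rule sum_mono)
    fix r assume r: "r \<in> R"
    then have r0: "r > 0" and rm: "m = r * dn n r" unfolding R_def by auto
    have "m div r = dn n r" using rm r0 by simp
    then show "real (card (cycr r B)) \<le> fact m / real r ^ dn n r"
      using cycr_bound[OF fin r0] m_def by simp
  qed
  also have "\<dots> = (\<Sum>r\<in>R. if coprime r n then fact m / real r ^ dn n r else 0)
                 + (\<Sum>r\<in>R. if \<not> coprime r n then fact m / real r ^ dn n r else 0)"
    by (subst sum.distrib[symmetric]) (rule sum.cong, simp_all)
  also have "(\<Sum>r\<in>R. if coprime r n then fact m / real r ^ dn n r else 0)
      = (\<Sum>r\<in>{r\<in>R. coprime r n}. fact m / real r ^ dn n r)"
    by (rule sum.inter_filter[OF finR, symmetric])
  also have "(\<Sum>r\<in>R. if \<not> coprime r n then fact m / real r ^ dn n r else 0)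
      = (\<Sum>r\<in>{r\<in>R. \<not> coprime r n}. fact m / real r ^ dn n r)"
    by (rule sum.inter_filter[OF finR, symmetric])
  also have "{r\<in>R. coprime r n} = (if coprime m n then {m} else {})"
  proof -
    have "r = m" if "r \<in> R" "coprime r n" for r
      using that dn_one[OF n, of r] unfolding R_def by auto
    moreover have "m \<in> R" if "coprime m n"
      using that dn_one[OF n, of m] m0 unfolding R_def by auto
    ultimately show ?thesis by auto
  qed
  also have "{r\<in>R. \<not> coprime r n} = {r. 1 \<le> r \<and> r \<le> m \<and> gcd r n > 1 \<and> r * dn n r = m}"
  proof -
    have "\<not> coprime r n \<longleftrightarrow> gcd r n > 1" if "1 \<le> r" for r :: nat
    proof -
      have g0: "gcd r n \<noteq> 0" using that by simp
      show ?thesis unfolding coprime_iff_gcd_eq_1 using g0 by linarith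
    qed
    then show ?thesis unfolding R_def by auto
  qed
  also have "(\<Sum>r\<in>(if coprime m n then {m} else {}). fact m / real r ^ dn n r)
      = fact m * (if 1 \<le> m \<and> coprime m n then 1 / real m else 0)"
    using dn_one[OF n, of m] m0 by auto
  also have "(\<Sum>r\<in>{r. 1 \<le> r \<and> r \<le> m \<and> gcd r n > 1 \<and> r * dn n r = m}. fact m / real r ^ dn n r)
      \<le> (\<Sum>r\<in>{r. 1 \<le> r \<and> r \<le> m \<and> gcd r n > 1 \<and> r * dn n r = m}. fact m * (1 / (real r)^2))"
  proof (rule sum_mono)
    fix r assume "r \<in> {r. 1 \<le> r \<and> r \<le> m \<and> gcd r n > 1 \<and> r * dn n r = m}"
    then have r1: "1 \<le> r" and g: "gcd r n > 1" by auto
    have "\<not> coprime r n" using g by (auto simp: coprime_iff_gcd_eq_1)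
    then have "dn n r \<noteq> 1" using dn_one[OF n] by simp
    then have d2: "2 \<le> dn n r" using dn_props(1)[OF n, of r] by simp
    have "(real r)^2 \<le> real r ^ dn n r" using d2 r1 by (intro power_increasing) auto
    moreover have "(real r)^2 > 0" using r1 by simp
    ultimately have "fact m / real r ^ dn n r \<le> fact m / (real r)^2"
      by (intro divide_left_mono) auto
    then show "fact m / real r ^ dn n r \<le> fact m * (1 / (real r)^2)" by simp
  qed
  also have "(\<Sum>r\<in>{r. 1 \<le> r \<and> r \<le> m \<and> gcd r n > 1 \<and> r * dn n r = m}. fact m * (1 / (real r)^2))
     = fact m * (\<Sum>r\<in>{r. 1 \<le> r \<and> r \<le> m \<and> gcd r n > 1 \<and> r * dn n r = m}. 1 / (real r)^2)"
    by (rule sum_distrib_left[symmetric])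
  finally show ?thesis unfolding bco_def m_def by (simp add: distrib_left)
qed

lemma sum_subsets_card:
  fixes g :: "nat \<Rightarrow> real"
  assumes fin: "finite S" and a: "a \<in> S"
  shows "(\<Sum>B\<in>{B. B \<subseteq> S \<and> a \<in> B}. g (card B)) = (\<Sum>m=1..card S. real ((card S - 1) choose (m - 1)) * g m)"
proof -
  define BB where "BB = {B. B \<subseteq> S \<and> a \<in> B}"
  have finBB: "finite BB"
  proof -
    have "BB \<subseteq> Pow S" unfolding BB_def by blast
    then show ?thesis using fin by (simp add: finite_subset)
  qed
  have img: "card ` BB \<subseteq> {1..card S}"
  proof
    fix y assume "y \<in> card ` BB"
    then obtain B where B: "B \<subseteq> S" "a \<in> B" "y = card B" unfolding BB_def by blast
    have "finite B" using B fin finite_subset by blast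
    then have "card B \<ge> 1" using B(2) by (metis One_nat_def Suc_leI card_gt_0_iff empty_iff)
    moreover have "card B \<le> card S" using B(1) fin by (rule card_mono[rotated])
    ultimately show "y \<in> {1..card S}" using B(3) by simp
  qed
  have "(\<Sum>B\<in>BB. g (card B)) = (\<Sum>m\<in>{1..card S}. \<Sum>B\<in>{B\<in>BB. card B = m}. g (card B))"
    by (rule sum.group[symmetric, OF finBB _ img]) simp
  also have "\<dots> = (\<Sum>m=1..card S. real ((card S - 1) choose (m - 1)) * g m)"
  proof (rule sum.cong[OF refl])
    fix m assume m: "m \<in> {1..card S}"
    have eq: "{B\<in>BB. card B = m} = {Q. Q \<subseteq> S \<and> a \<in> Q \<and> card Q = m}" unfolding BB_def by auto
    have cc: "card {Q. Q \<subseteq> S \<and> a \<in> Q \<and> card Q = m} = (card S - 1) choose (m - 1)"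
      using m by (intro card_subsets_containing[OF fin a]) auto
    have "(\<Sum>B\<in>{B\<in>BB. card B = m}. g (card B)) = (\<Sum>B\<in>{B\<in>BB. card B = m}. g m)"
      by (rule sum.cong) auto
    also have "\<dots> = real (card {B\<in>BB. card B = m}) * g m" by simp
    finally show "(\<Sum>B\<in>{B\<in>BB. card B = m}. g (card B)) = real ((card S - 1) choose (m - 1)) * g m"
      using eq cc by simp
  qed
  finally show ?thesis unfolding BB_def .
qed


lemma good_bound:
  fixes c :: "nat \<Rightarrow> real"
  assumes n: "n > 0" and c0: "c 0 = 1"
    and rec: "\<And>k. k > 0 \<Longrightarrow> real k * c k = (\<Sum>m=1..k. real m * bco n m * c (k - m))"
  shows "finite S \<Longrightarrow> real (card {f. good n S f}) \<le> fact (card S) * c (card S)"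
proof (induction "card S" arbitrary: S rule: less_induct)
  case less
  show ?case
  proof (cases "S = {}")
    case True
    have sub: "{f. good n S f} \<subseteq> {id}" using True unfolding good_def by auto
    have "card {f. good n S f} \<le> card {id::'a \<Rightarrow> 'a}" using card_mono[OF _ sub] by simp
    then show ?thesis using True c0 by simp
  next
    case False
    then obtain a where a: "a \<in> S" by blast
    define k where "k = card S"
    have k0: "k > 0" using less.prems a k_def card_gt_0_iff by blast
    define BB where "BB = {B. B \<subseteq> S \<and> a \<in> B}"
    have finBB: "finite BB"
    proof -
      have "BB \<subseteq> Pow S" unfolding BB_def by blast
      then show ?thesis using less.prems by (simp add: finite_subset)
    qed
    have finB: "finite B" if "B \<in> BB" for B
      using that less.prems unfolding BB_def by (auto intro: finite_subset)
    have "card {f. good n S f} \<le> (\<Sum>B\<in>BB. card {t. blk n B t} * card {g. good n (S - B) g})"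
    proof (rule split_count[OF less.prems _ finBB])
      show "\<And>p. p \<in> {f. good n S f} \<Longrightarrow> p permutes S" unfolding good_def by simp
      show "finite {t. blk n B t}" if "B \<in> BB" for B
      proof -
        have "{t. blk n B t} \<subseteq> {p. p permutes B}" unfolding blk_def by blast
        then show ?thesis using finite_permutations[OF finB[OF that]] by (rule finite_subset)
      qed
      show "finite {g. good n (S - B) g}" if "B \<in> BB" for B
      proof -
        have "{g. good n (S - B) g} \<subseteq> {p. p permutes (S - B)}" unfolding good_def by blast
        moreover have "finite (S - B)" using less.prems by simp
        ultimately show ?thesis using finite_permutations by (metis finite_subset)
      qed
      fix p assume "p \<in> {f. good n S f}"
      then have "good n S p" by simp
      then obtain B where "B \<subseteq> S" "a \<in> B" "blk n B (perm_restrict p B)"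
          "good n (S - B) (perm_restrict p (S - B))"
        using good_split[OF _ less.prems a n] by blast
      then show "\<exists>B\<in>BB. perm_restrict p B \<in> {t. blk n B t} \<and> perm_restrict p (S - B) \<in> {g. good n (S - B) g}"
        unfolding BB_def by blast
    qed
    then have "real (card {f. good n S f}) \<le> real (\<Sum>B\<in>BB. card {t. blk n B t} * card {g. good n (S - B) g})"
      by (rule of_nat_mono)
    also have "\<dots> = (\<Sum>B\<in>BB. real (card {t. blk n B t}) * real (card {g. good n (S - B) g}))" by simp
    also have "\<dots> \<le> (\<Sum>B\<in>BB. (fact (card B) * bco n (card B)) * (fact (k - card B) * c (k - card B)))"
    proof (rule sum_mono)
      fix B assume B: "B \<in> BB"
      have BS: "B \<subseteq> S" and aB: "a \<in> B" using B unfolding BB_def by auto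
      have fB: "finite B" using finB[OF B] .
      have cB: "card (S - B) = k - card B" using BS fB k_def by (simp add: card_Diff_subset)
      have "card B > 0" using fB aB card_gt_0_iff by blast
      moreover have "card B \<le> k" using BS less.prems k_def by (simp add: card_mono)
      ultimately have "k - card B < k" by simp
      then have lt: "card (S - B) < card S" using cB k_def by simp
      have h2: "real (card {g. good n (S - B) g}) \<le> fact (k - card B) * c (k - card B)"
        using less.hyps[OF lt] less.prems cB by simp
      have h1: "real (card {t. blk n B t}) \<le> fact (card B) * bco n (card B)"
        using blk_bound[OF fB _ n] aB by blast
      have "0 \<le> fact (card B) * bco n (card B)" using h1 by (rule order_trans[rotated]) simp
      then show "real (card {t. blk n B t}) * real (card {g. good n (S - B) g})
          \<le> fact (card B) * bco n (card B) * (fact (k - card B) * c (k - card B))"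
        using h1 h2 by (intro mult_mono) auto
    qed
    also have "\<dots> = (\<Sum>m=1..k. real ((k - 1) choose (m - 1)) * ((fact m * bco n m) * (fact (k - m) * c (k - m))))"
      unfolding BB_def k_def
      by (rule sum_subsets_card[OF less.prems a, where g="\<lambda>m. (fact m * bco n m) * (fact (card S - m) * c (card S - m))"])
    also have "\<dots> = (\<Sum>m=1..k. fact (k - 1) * (real m * bco n m * c (k - m)))"
    proof (rule sum.cong[OF refl])
      fix m assume m: "m \<in> {1..k}"
      then have m1: "1 \<le> m" "m \<le> k" by auto
      have bin: "real ((k - 1) choose (m - 1)) = fact (k - 1) / (fact (m - 1) * fact (k - m))"
        using m1 by (subst binomial_fact) (auto simp: diff_le_mono)
      have fm: "(fact m :: real) = real m * fact (m - 1)" using m1 by (simp add: fact_reduce)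
      have p1: "(fact (m - 1) :: real) > 0" "(fact (k - m) :: real) > 0" by auto
      show "real ((k - 1) choose (m - 1)) * ((fact m * bco n m) * (fact (k - m) * c (k - m)))
          = fact (k - 1) * (real m * bco n m * c (k - m))"
        unfolding bin fm using p1 by (simp add: field_simps)
    qed
    also have "\<dots> = fact (k - 1) * (\<Sum>m=1..k. real m * bco n m * c (k - m))"
      by (rule sum_distrib_left[symmetric])
    also have "\<dots> = fact (k - 1) * (real k * c k)" using rec[OF k0] by simp
    also have "\<dots> = fact k * c k" using k0 by (simp add: fact_reduce)
    finally show ?thesis unfolding k_def .
  qed
qed


lemma dn_dvd:
  assumes n: "n > 0" and g: "g dvd n" and cop: "coprime r (n div g)"
  shows "dn n r dvd g"
proof -
  define d where "d = dn n r"
  have d0: "d > 0" and dn: "d dvd n" and cd: "coprime r (n div d)" using dn_props[OF n] d_def by auto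
  define h where "h = gcd d g"
  have h0: "h > 0" using d0 h_def by simp
  have "h dvd d" unfolding h_def by simp
  then have hn: "h dvd n" using dn by (rule dvd_trans)
  define u where "u = n div d"
  define w where "w = n div g"
  have nu: "n = d * u" using dn u_def by simp
  have nw: "n = g * w" using g w_def by simp
  have nh: "n = h * (n div h)" using hn by simp
  have "h * (u * w) = (u * w) * gcd d g" using h_def by simp
  also have "\<dots> = gcd ((u * w) * d) ((u * w) * g)" by (rule gcd_mult_distrib_nat)
  also have "(u * w) * d = n * w" using nu by (simp add: ac_simps)
  also have "(u * w) * g = n * u" using nw by (simp add: ac_simps)
  also have "gcd (n * w) (n * u) = n * gcd w u" by (rule gcd_mult_distrib_nat[symmetric])
  also have "\<dots> = h * ((n div h) * gcd w u)" by (simp add: mult.assoc[symmetric] dvd_mult_div_cancel[OF hn])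
  finally have "u * w = (n div h) * gcd w u" using h0 by simp
  then have dv: "(n div h) dvd (u * w)" by simp
  have "coprime r (u * w)" using cd cop u_def w_def by simp
  then have ch: "coprime r (n div h)" using coprime_divisors[OF dvd_refl dv] by simp
  have "d \<le> h" unfolding d_def dn_def by (rule Least_le) (use h0 hn ch in simp)
  moreover have "h dvd d" unfolding h_def by simp
  ultimately have "h = d" using d0 by (simp add: dvd_imp_le le_antisym)
  moreover have "gcd d g dvd g" by simp
  ultimately show ?thesis unfolding d_def h_def by simp
qed

lemma dvd_period:
  fixes L n j :: nat
  assumes L: "L > 0"
  shows "L dvd n * j \<longleftrightarrow> (L div gcd L n) dvd j"
proof -
  define g where "g = gcd L n"
  have g0: "g > 0" using L g_def by simp
  have cop: "coprime (L div g) (n div g)" using div_gcd_coprime[of L n] L g_def by simp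
  have eL: "L = g * (L div g)" using g_def by simp
  have en: "n = g * (n div g)" using g_def by simp
  have "L dvd n * j \<longleftrightarrow> g * (L div g) dvd g * ((n div g) * j)"
    using eL en by (metis mult.assoc)
  also have "\<dots> \<longleftrightarrow> (L div g) dvd (n div g) * j" using g0 by simp
  also have "\<dots> \<longleftrightarrow> (L div g) dvd j" using cop by (rule coprime_dvd_mult_right_iff)
  finally show ?thesis unfolding g_def .
qed

lemma root_good:
  assumes n: "n > 0"
  shows "finite S \<Longrightarrow> s permutes S \<Longrightarrow> good n S (s ^^ n)"
proof (induction "card S" arbitrary: S s rule: less_induct)
  case less
  have sp: "s permutes S" and fin: "finite S" using less.prems by auto
  define f where "f = s ^^ n"
  have fp: "f permutes S" unfolding f_def by (rule permutes_funpow[OF sp])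
  show ?case
  proof (cases "S = {}")
    case True
    have "orbs (s ^^ n) S r = {}" for r using True unfolding orbs_def by simp
    then show ?thesis using fp True unfolding good_def cnt_def f_def by simp
  next
    case False
    then obtain a where a: "a \<in> S" by blast
    define Q where "Q = orbit s a"
    define L where "L = card Q"
    have L0: "L > 0" using orbit_card_pos[OF sp fin] L_def Q_def by simp
    interpret Is: invsub s S Q
    proof
      show "s permutes S" by (rule sp)
      show "finite S" by (rule fin)
      show "Q \<subseteq> S" unfolding Q_def by (rule orbit_in_S[OF sp a])
      show "\<And>x. x \<in> Q \<Longrightarrow> s x \<in> Q" unfolding Q_def by (rule orbit.step)
    qed
    interpret If: invsub f S Q
    proof
      show "f permutes S" by (rule fp)
      show "finite S" by (rule fin)
      show "Q \<subseteq> S" by (rule Is.sub)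
      show "\<And>x. x \<in> Q \<Longrightarrow> f x \<in> Q" unfolding f_def Q_def by (rule funpow_in_orbit)
    qed
    interpret Cs: invsub s S "S - Q" by (rule Is.compl)
    have aQ: "a \<in> Q" unfolding Q_def by (rule self_orbit[OF sp fin])
    have rT: "perm_restrict f (S - Q) = (perm_restrict s (S - Q)) ^^ n"
      by (rule ext) (simp add: Cs.restr_pow perm_restrict_def f_def)
    have "S - Q \<subset> S" using aQ a by blast
    then have lt: "card (S - Q) < card S" by (rule psubset_card_mono[OF fin])
    have goodT: "good n (S - Q) (perm_restrict f (S - Q))"
      unfolding rT using less.hyps[OF lt] Cs.restr_permutes fin by simp
    define r0 where "r0 = L div gcd L n"
    have cardx: "card (orbit f x) = r0" if x: "x \<in> Q" for x
    proof -
      have ox: "orbit s x = Q" unfolding Q_def using orbit_same[OF sp fin] x Q_def by simp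
      have ej: "card (orbit f x) dvd j \<longleftrightarrow> r0 dvd j" for j
      proof -
        have "card (orbit f x) dvd j \<longleftrightarrow> (f ^^ j) x = x" using orbit_period[OF fp fin] by simp
        also have "(f ^^ j) x = (s ^^ (n * j)) x" unfolding f_def by (simp add: funpow_mult)
        also have "(s ^^ (n * j)) x = x \<longleftrightarrow> L dvd n * j"
          using orbit_period[OF sp fin, of "n * j" x] ox L_def by simp
        also have "\<dots> \<longleftrightarrow> r0 dvd j" unfolding r0_def by (rule dvd_period[OF L0])
        finally show ?thesis .
      qed
      have "card (orbit f x) dvd r0" using ej[of r0] by simp
      moreover have "r0 dvd card (orbit f x)" using ej[of "card (orbit f x)"] by simp
      ultimately show ?thesis by (rule dvd_antisym)
    qed
    have orbsQ: "orbs (perm_restrict f Q) Q r = (if r = r0 then {orbit f x | x. x \<in> Q} else {})" for r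
    proof -
      have "orbs (perm_restrict f Q) Q r = {orbit f x | x. x \<in> Q \<and> card (orbit f x) = r}"
      proof (intro set_eqI iffI)
        fix P assume "P \<in> orbs (perm_restrict f Q) Q r"
        then obtain x where "x \<in> Q" "P = orbit (perm_restrict f Q) x" "card P = r"
          unfolding orbs_def by blast
        then show "P \<in> {orbit f x | x. x \<in> Q \<and> card (orbit f x) = r}"
          using If.restr_orbit by auto
      next
        fix P assume "P \<in> {orbit f x | x. x \<in> Q \<and> card (orbit f x) = r}"
        then obtain x where x: "x \<in> Q" "P = orbit f x" "card P = r" by blast
        then have "P = orbit (perm_restrict f Q) x" "card (orbit (perm_restrict f Q) x) = r"
          using If.restr_orbit by auto
        then show "P \<in> orbs (perm_restrict f Q) Q r" unfolding orbs_def using x(1) by blast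
      qed
      then show ?thesis using cardx by auto
    qed
    define PP where "PP = {orbit f x | x. x \<in> Q}"
    have PPchar: "\<And>P. P \<in> PP \<Longrightarrow> \<exists>x\<in>Q. P = orbit f x" unfolding PP_def by blast
    have UPP: "\<Union>PP = Q"
    proof
      show "\<Union>PP \<subseteq> Q" unfolding PP_def using If.orbit_sub by blast
      show "Q \<subseteq> \<Union>PP" unfolding PP_def using self_orbit[OF fp fin] by blast
    qed
    have finPP: "finite PP"
    proof -
      have "PP \<subseteq> Pow Q" using UPP by blast
      then show ?thesis using If.finT by (simp add: finite_subset)
    qed
    have "L = sum card PP"
      unfolding L_def UPP[symmetric]
    proof (rule card_Union_disjoint)
      show "pairwise disjnt PP"
        unfolding pairwise_def disjnt_def
      proof (intro ballI impI)
        fix P P' assume PP: "P \<in> PP" "P' \<in> PP" "P \<noteq> P'"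
        obtain x where x: "P = orbit f x" using PPchar PP(1) by blast
        obtain y where y: "P' = orbit f y" using PPchar PP(2) by blast
        show "P \<inter> P' = {}" using orbit_disj[OF fp fin, of x y] x y PP(3) by simp
      qed
      show "\<And>P. P \<in> PP \<Longrightarrow> finite P" using PPchar orbit_finite[OF fp fin] by blast
    qed
    also have "\<dots> = sum (\<lambda>_. r0) PP"
      by (rule sum.cong[OF refl]) (use PPchar cardx in blast)
    finally have LPP: "L = card PP * r0" by simp
    have Lg: "L = r0 * gcd L n" unfolding r0_def by simp
    have r00: "r0 > 0"
    proof (rule ccontr)
      assume "\<not> r0 > 0"
      then have "r0 = 0" by simp
      then show False using L0 Lg by simp
    qed
    have "card PP * r0 = gcd L n * r0" using LPP Lg by (simp add: mult.commute)
    then have cPP: "card PP = gcd L n" using r00 by simp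
    have dQ: "dn n r dvd cnt (perm_restrict f Q) Q r" for r
    proof (cases "r = r0")
      case True
      have "dn n r0 dvd gcd L n"
        by (rule dn_dvd[OF n]) (use div_gcd_coprime[of L n] L0 r0_def in auto)
      then show ?thesis using True orbsQ cPP unfolding cnt_def PP_def by simp
    next
      case False
      then show ?thesis using orbsQ unfolding cnt_def by simp
    qed
    have "dn n r dvd cnt f S r" for r
      using If.cnt_split[of r] dQ[of r] goodT unfolding good_def by simp
    then show ?thesis using fp unfolding good_def f_def by simp
  qed
qed


unbundle fps_syntax


lemma exp_of_deriv:
  assumes g0: "g $ 0 = 0"
  shows "fps_deriv (fps_exp_of g) = fps_deriv g * fps_exp_of g" "fps_exp_of g $ 0 = 1"
proof -
  show "fps_deriv (fps_exp_of g) = fps_deriv g * fps_exp_of g"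
    unfolding fps_exp_of_def using fps_compose_deriv[OF g0, of "fps_exp 1"] by (simp add: mult.commute)
  show "fps_exp_of g $ 0 = 1" unfolding fps_exp_of_def by simp
qed

lemma deriv_rec:
  fixes F G :: "real fps"
  assumes d: "fps_deriv F = fps_deriv G * F" and k: "k > 0"
  shows "real k * F $ k = (\<Sum>m=1..k. real m * G $ m * F $ (k - m))"
proof -
  obtain k' where k': "k = Suc k'" using k by (cases k) auto
  have "real k * F $ k = fps_deriv F $ k'" using k' by simp
  also have "\<dots> = (fps_deriv G * F) $ k'" using d by simp
  also have "\<dots> = (\<Sum>i=0..k'. real (Suc i) * G $ Suc i * F $ (k' - i))"
    by (simp add: fps_mult_nth)
  also have "\<dots> = (\<Sum>m=Suc 0..Suc k'. real m * G $ m * F $ (Suc k' - m))"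
    by (subst sum.shift_bounds_cl_Suc_ivl) simp
  finally show ?thesis using k' by simp
qed

definition f1 :: "nat \<Rightarrow> real fps" where
  "f1 n = Abs_fps (\<lambda>r. if r \<ge> 1 \<and> coprime r n then 1 / real r else 0)"

definition f2 :: "nat \<Rightarrow> real fps" where
  "f2 n = Abs_fps (\<lambda>m. \<Sum>r\<in>{r. 1 \<le> r \<and> r \<le> m \<and> gcd r n > 1 \<and> r * dn n r = m}. 1 / (real r)^2)"

lemma q1_eq: "q1 n = fps_exp_of (f1 n)" unfolding q1_def f1_def ..
lemma q2_eq: "q2 n = fps_exp_of (f2 n)" unfolding q2_def f2_def ..
lemma f1_0: "f1 n $ 0 = 0" unfolding f1_def by simp
lemma f2_0: "f2 n $ 0 = 0" unfolding f2_def by simp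

lemma bco_f: "(f1 n + f2 n) $ m = bco n m"
  unfolding f1_def f2_def bco_def by simp

lemma q12_rec:
  assumes k: "k > 0"
  shows "real k * (q1 n * q2 n) $ k = (\<Sum>m=1..k. real m * bco n m * (q1 n * q2 n) $ (k - m))"
proof -
  have d1: "fps_deriv (q1 n) = fps_deriv (f1 n) * q1 n" unfolding q1_eq by (rule exp_of_deriv(1)[OF f1_0])
  have d2: "fps_deriv (q2 n) = fps_deriv (f2 n) * q2 n" unfolding q2_eq by (rule exp_of_deriv(1)[OF f2_0])
  have "fps_deriv (q1 n * q2 n) = fps_deriv (f1 n + f2 n) * (q1 n * q2 n)"
    using d1 d2 by (simp add: algebra_simps)
  from deriv_rec[OF this k] show ?thesis by (simp only: bco_f)
qed

lemma q12_0: "(q1 n * q2 n) $ 0 = 1"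
  unfolding q1_eq q2_eq using exp_of_deriv(2)[OF f1_0] exp_of_deriv(2)[OF f2_0] by simp

theorem part1:
  assumes n: "n > 0"
  shows "p_series n \<preceq>\<^sub>f q1 n * q2 n"
  unfolding fps_le_def
proof
  fix k
  have gb: "real (card {f. good n {..<k} f}) \<le> fact (card {..<k::nat}) * (q1 n * q2 n) $ card {..<k::nat}"
    by (rule good_bound[OF n q12_0 q12_rec]) simp_all
  have sub: "perms_with_root n k \<subseteq> {f. good n {..<k} f}"
  proof
    fix p assume "p \<in> perms_with_root n k"
    then obtain s where "s permutes {..<k}" "s ^^ n = p" unfolding perms_with_root_def by blast
    then show "p \<in> {f. good n {..<k} f}" using root_good[OF n] by blast
  qed
  have fin: "finite {f. good n {..<k} f}"
  proof -
    have "{f. good n {..<k} f} \<subseteq> {p. p permutes {..<k}}" unfolding good_def by blast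
    then show ?thesis using finite_permutations[of "{..<k}"] by (simp add: finite_subset)
  qed
  have "card (perms_with_root n k) \<le> card {f. good n {..<k} f}" by (rule card_mono[OF fin sub])
  then have "real (card (perms_with_root n k)) \<le> fact k * (q1 n * q2 n) $ k"
    using gb by (metis card_lessThan of_nat_mono order_trans)
  then show "p_series n $ k \<le> (q1 n * q2 n) $ k"
    unfolding p_series_def by (simp add: divide_simps mult.commute)
qed


lemma sum_pow_minus_one:
  assumes "finite A"
  shows "(\<Sum>X\<in>Pow A. (-1::int) ^ card X) = (if A = {} then 1 else 0)"
proof -
  have "(\<Prod>x\<in>A. (1::int) - 1) = (\<Sum>X\<in>Pow A. (-1) ^ card X * (\<Prod>x\<in>X. 1) * (\<Prod>x\<in>A-X. 1))"
    by (rule prod_diff_conv_sum[OF assms])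
  then have "(\<Sum>X\<in>Pow A. (-1::int) ^ card X) = (\<Prod>x\<in>A. (0::int))" by simp
  also have "\<dots> = (if A = {} then 1 else 0)" using assms by (simp add: card_gt_0_iff)
  finally show ?thesis .
qed

lemma moebius_sum:
  assumes k: "k > 0"
  shows "(\<Sum>d\<in>{d. d dvd k}. moebius_mu d) = (if k = 1 then 1 else 0)"
proof -
  define P where "P = prime_factors k"
  have finP: "finite P" unfolding P_def by simp
  define D where "D = {d. d dvd k \<and> squarefree d}"
  have finK: "finite {d. d dvd k}" using k by simp
  have "(\<Sum>d\<in>{d. d dvd k}. moebius_mu d) = (\<Sum>d\<in>{d. d dvd k}. if squarefree d then (-1) ^ card (prime_factors d) else 0)"
  proof (rule sum.cong[OF refl])
    fix d assume "d \<in> {d. d dvd k}"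
    then have "d \<noteq> 0" using k by auto
    then show "moebius_mu d = (if squarefree d then (-1) ^ card (prime_factors d) else 0)"
      unfolding moebius_mu_def by simp
  qed
  also have "\<dots> = (\<Sum>d\<in>D. (-1) ^ card (prime_factors d))"
  proof -
    have "{d. d dvd k \<and> squarefree d} = {d \<in> {d. d dvd k}. squarefree d}" by simp
    then show ?thesis unfolding D_def using sum.inter_filter[OF finK, of "\<lambda>d. (-1::int) ^ card (prime_factors d)" squarefree] by simp
  qed
  also have "\<dots> = (\<Sum>T\<in>Pow P. (-1) ^ card T)"
  proof (rule sum.reindex_bij_betw)
    show "bij_betw prime_factors D (Pow P)"
    proof (rule bij_betw_byWitness[where f'="\<lambda>T. \<Prod>T"])
      show "\<forall>d\<in>D. \<Prod>(prime_factors d) = d"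
      proof
        fix d assume "d \<in> D"
        then have dk: "d dvd k" and sq: "squarefree d" unfolding D_def by auto
        have d0: "d \<noteq> 0" using dk k by auto
        have m1: "multiplicity p d = 1" if "p \<in> prime_factors d" for p
          using squarefree_factorial_semiring'[OF d0] sq that by blast
        have "(\<Prod>p\<in>prime_factors d. p ^ multiplicity p d) = d"
          using prod_prime_factors[OF d0] by simp
        moreover have "(\<Prod>p\<in>prime_factors d. p ^ multiplicity p d) = \<Prod>(prime_factors d)"
          by (rule prod.cong) (simp_all add: m1)
        ultimately show "\<Prod>(prime_factors d) = d" by simp
      qed
      have pfT: "prime_factors (\<Prod>T) = T" if T: "T \<subseteq> P" for T
      proof -
        have fT: "finite T" using T finP finite_subset by blast
        have pr: "\<And>x. x \<in> T \<Longrightarrow> prime x" using T unfolding P_def by auto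
        have mult: "multiplicity p (\<Prod>T) = (if p \<in> T then 1 else 0)" if "prime p" for p
          using multiplicity_prod_prime_powers[OF fT pr that, of "\<lambda>_. 1"] by simp
        show ?thesis unfolding prime_factors_multiplicity using mult pr by (auto split: if_splits)
      qed
      show "\<forall>T\<in>Pow P. prime_factors (\<Prod>T) = T" using pfT by blast
      show "prime_factors ` D \<subseteq> Pow P"
      proof
        fix x assume "x \<in> prime_factors ` D"
        then obtain d where d: "d \<in> D" "x = prime_factors d" by blast
        then have dk: "d dvd k" unfolding D_def by simp
        have "prime_factors d \<subseteq> P" unfolding P_def
          using dk k by (auto simp: in_prime_factors_iff intro: dvd_trans)
        then show "x \<in> Pow P" using d by simp
      qed
      show "(\<lambda>T. \<Prod>T) ` Pow P \<subseteq> D"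
      proof
        fix x assume "x \<in> (\<lambda>T. \<Prod>T) ` Pow P"
        then obtain T where T: "T \<subseteq> P" "x = \<Prod>T" by blast
        have fT: "finite T" using T finP finite_subset by blast
        have pr: "\<And>x. x \<in> T \<Longrightarrow> prime x" using T unfolding P_def by auto
        have mult: "multiplicity p (\<Prod>T) = (if p \<in> T then 1 else 0)" if "prime p" for p
          using multiplicity_prod_prime_powers[OF fT pr that, of "\<lambda>_. 1"] by simp
        have nz: "\<Prod>T \<noteq> (0::nat)" using pr by (metis fT prime_gt_0_nat prod_pos neq0_conv)
        have "\<Prod>T dvd k"
        proof (rule multiplicity_le_imp_dvd[OF nz])
          fix p :: nat assume p: "prime p"
          show "multiplicity p (\<Prod>T) \<le> multiplicity p k"
          proof (cases "p \<in> T")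
            case True
            then have "p \<in> prime_factors k" using T P_def by blast
            then have "multiplicity p k > 0" unfolding prime_factors_multiplicity by simp
            then show ?thesis using mult[OF p] True by simp
          next
            case False then show ?thesis using mult[OF p] by simp
          qed
        qed
        moreover have "squarefree (\<Prod>T)"
          using squarefree_factorial_semiring''[OF nz] mult by simp
        ultimately show "x \<in> D" unfolding D_def using T by simp
      qed
    qed
  qed
  also have "\<dots> = (if P = {} then 1 else 0)" by (rule sum_pow_minus_one[OF finP])
  also have "(P = {}) = (k = 1)"
    unfolding P_def using k by (auto simp: prime_factorization_empty_iff)
  finally show ?thesis .
qed


lemma ode_unique:
  fixes F G H :: "real fps"
  assumes dF: "fps_deriv F = H * F" and dG: "fps_deriv G = H * G" and z: "F $ 0 = G $ 0"
  shows "F = G"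
proof -
  have "F $ k = G $ k" for k
  proof (induction k rule: less_induct)
    case (less k)
    show ?case
    proof (cases k)
      case 0 then show ?thesis using z by simp
    next
      case (Suc k')
      have "real (Suc k') * F $ Suc k' = (H * F) $ k'" using dF by (metis fps_deriv_nth add.commute plus_1_eq_Suc)
      also have "\<dots> = (\<Sum>i=0..k'. H $ i * F $ (k' - i))" by (simp add: fps_mult_nth)
      also have "\<dots> = (\<Sum>i=0..k'. H $ i * G $ (k' - i))"
        by (rule sum.cong[OF refl]) (use less Suc in auto)
      also have "\<dots> = (H * G) $ k'" by (simp add: fps_mult_nth)
      also have "\<dots> = real (Suc k') * G $ Suc k'" using dG by (metis fps_deriv_nth add.commute plus_1_eq_Suc)
      finally show ?thesis using Suc by simp
    qed
  qed
  then show ?thesis by (simp add: fps_eq_iff)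
qed

lemma binom_ode: "(1 + fps_X) * fps_deriv (fps_binomial a) = fps_const (a::real) * fps_binomial a"
proof -
  have u: "(1 + fps_X :: real fps) $ 0 \<noteq> 0" by simp
  have "fps_deriv (fps_binomial a) = fps_const a * fps_binomial a * inverse (1 + fps_X)"
    using fps_binomial_deriv[of a] fps_divide_unit[OF u] by simp
  then have "(1 + fps_X) * fps_deriv (fps_binomial a) = fps_const a * fps_binomial a * (inverse (1 + fps_X) * (1 + fps_X))"
    by (simp add: ac_simps)
  also have "inverse (1 + fps_X) * (1 + fps_X) = (1 :: real fps)" using inverse_mult_eq_1[OF u] .
  finally show ?thesis by simp
qed

lemma Pd_ode:
  assumes d: "d > 0"
  shows "(1 - fps_X ^ d) * fps_deriv (fps_one_minus_Xpow_powr d a)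
       = fps_const (- (a * real d)) * fps_X ^ (d - 1) * fps_one_minus_Xpow_powr d a"
proof -
  define B :: "real fps" where "B = - (fps_X ^ d)"
  have B0: "B $ 0 = 0" unfolding B_def using d by simp
  have dB: "fps_deriv B = - (fps_const (real d) * fps_X ^ (d - 1))"
  proof (rule fps_ext)
    fix j
    show "fps_deriv B $ j = (- (fps_const (real d) * fps_X ^ (d - 1))) $ j"
      unfolding B_def using d by auto
  qed
  have P: "fps_one_minus_Xpow_powr d a = fps_binomial a oo B"
    unfolding fps_one_minus_Xpow_powr_def B_def ..
  have dP: "fps_deriv (fps_binomial a oo B) = (fps_deriv (fps_binomial a) oo B) * fps_deriv B"
    by (rule fps_compose_deriv[OF B0])
  have "((1 + fps_X) * fps_deriv (fps_binomial a)) oo B = (fps_const a * fps_binomial a) oo B"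
    using binom_ode by simp
  then have eq: "(1 + B) * (fps_deriv (fps_binomial a) oo B) = fps_const a * (fps_binomial a oo B)"
    by (simp add: fps_compose_mult_distrib[OF B0] fps_compose_add_distrib B0)
  have "(1 - fps_X ^ d) = 1 + B" unfolding B_def by simp
  then have "(1 - fps_X ^ d) * fps_deriv (fps_one_minus_Xpow_powr d a)
      = (1 + B) * (fps_deriv (fps_binomial a) oo B) * fps_deriv B"
    using P dP by (simp add: mult.assoc)
  also have "\<dots> = fps_const a * (fps_binomial a oo B) * fps_deriv B" using eq by simp
  also have "\<dots> = fps_const (- (a * real d)) * fps_X ^ (d - 1) * fps_one_minus_Xpow_powr d a"
  proof -
    have c: "fps_const (- (a * real d)) = - (fps_const a * fps_const (real d))"
      by simp
    show ?thesis unfolding dB P c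
      by (simp only: mult_minus_left mult_minus_right mult.assoc mult.commute mult.left_commute)
  qed
  finally show ?thesis .
qed

definition hdd :: "nat \<Rightarrow> real fps" where
  "hdd d = Abs_fps (\<lambda>j. if d dvd Suc j then real_of_int (moebius_mu d) else 0)"

lemma hd_eq:
  assumes d: "d > 0"
  shows "(1 - fps_X ^ d) * hdd d = fps_const (real_of_int (moebius_mu d)) * fps_X ^ (d - 1)"
proof (rule fps_ext)
  fix j
  have l: "((1 - fps_X ^ d) * hdd d) $ j = hdd d $ j - (if d \<le> j then hdd d $ (j - d) else 0)"
    by (simp add: algebra_simps fps_X_power_mult_nth fps_X_power_mult_right_nth)
  show "((1 - fps_X ^ d) * hdd d) $ j = (fps_const (real_of_int (moebius_mu d)) * fps_X ^ (d - 1)) $ j"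
  proof (cases "d \<le> j")
    case True
    have "d dvd Suc j \<longleftrightarrow> d dvd Suc (j - d)"
    proof -
      have "Suc j = Suc (j - d) + d" using True by simp
      then show ?thesis by (metis dvd_add_left_iff dvd_refl)
    qed
    then show ?thesis using l True d unfolding hdd_def by simp
  next
    case False
    have "d dvd Suc j \<longleftrightarrow> j = d - 1"
    proof
      assume "d dvd Suc j"
      then have "d \<le> Suc j" by (simp add: dvd_imp_le)
      then show "j = d - 1" using False by simp
    next
      assume "j = d - 1" then show "d dvd Suc j" using d by simp
    qed
    then show ?thesis using l False unfolding hdd_def by simp
  qed
qed

lemma Pd_deriv:
  assumes d: "d > 0"
  shows "fps_deriv (fps_one_minus_Xpow_powr d (- real_of_int (moebius_mu d) / real d))
       = hdd d * fps_one_minus_Xpow_powr d (- real_of_int (moebius_mu d) / real d)"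
    "fps_one_minus_Xpow_powr d a $ 0 = 1"
proof -
  define P where "P = fps_one_minus_Xpow_powr d (- real_of_int (moebius_mu d) / real d)"
  have "(1 - fps_X ^ d) * fps_deriv P
      = fps_const (real_of_int (moebius_mu d)) * fps_X ^ (d - 1) * P"
    unfolding P_def using Pd_ode[OF d, of "- real_of_int (moebius_mu d) / real d"] d by simp
  also have "\<dots> = (1 - fps_X ^ d) * (hdd d * P)" using hd_eq[OF d] by (simp add: mult.assoc)
  finally have "(1 - fps_X ^ d) * fps_deriv P = (1 - fps_X ^ d) * (hdd d * P)" .
  moreover have "(1 - fps_X ^ d :: real fps) \<noteq> 0"
  proof
    assume "(1 - fps_X ^ d :: real fps) = 0"
    then have "(1 - fps_X ^ d :: real fps) $ 0 = 0" by simp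
    then show False using d by simp
  qed
  ultimately show "fps_deriv P = hdd d * P" by simp
  show "fps_one_minus_Xpow_powr d a $ 0 = 1" unfolding fps_one_minus_Xpow_powr_def by simp
qed

lemma prod_ode:
  fixes P h :: "nat \<Rightarrow> real fps"
  assumes "finite D" "\<And>d. d \<in> D \<Longrightarrow> fps_deriv (P d) = h d * P d" "\<And>d. d \<in> D \<Longrightarrow> P d $ 0 = 1"
  shows "fps_deriv (prod P D) = sum h D * prod P D \<and> prod P D $ 0 = 1"
  using assms
proof (induction D rule: finite_induct)
  case empty then show ?case by simp
next
  case (insert x F)
  have IH: "fps_deriv (prod P F) = sum h F * prod P F" "prod P F $ 0 = 1" using insert by auto
  have dx: "fps_deriv (P x) = h x * P x" and px: "P x $ 0 = 1" using insert by auto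
  have "fps_deriv (prod P (insert x F)) = fps_deriv (P x * prod P F)" using insert by simp
  also have "\<dots> = (h x + sum h F) * (P x * prod P F)" using dx IH by (simp add: algebra_simps)
  finally show ?case using insert px IH by (simp add: fps_mult_nth)
qed

theorem part3:
  assumes n: "n > 0"
  shows "q1 n = (\<Prod>d\<in>{d. d dvd n}. fps_one_minus_Xpow_powr d (- real_of_int (moebius_mu d) / real d))"
proof -
  define D where "D = {d. d dvd n}"
  have finD: "finite D" unfolding D_def using n by simp
  have D0: "d > 0" if "d \<in> D" for d using that n unfolding D_def by (auto intro: Nat.gr0I)
  define P where "P d = fps_one_minus_Xpow_powr d (- real_of_int (moebius_mu d) / real d)" for d
  have pr: "fps_deriv (prod P D) = sum hdd D * prod P D \<and> prod P D $ 0 = 1"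
    by (rule prod_ode[OF finD]) (use Pd_deriv D0 P_def in auto)
  have dq: "fps_deriv (q1 n) = fps_deriv (f1 n) * q1 n" unfolding q1_eq by (rule exp_of_deriv(1)[OF f1_0])
  have q0: "q1 n $ 0 = 1" unfolding q1_eq by (rule exp_of_deriv(2)[OF f1_0])
  have fh: "fps_deriv (f1 n) = sum hdd D"
  proof (rule fps_ext)
    fix j
    have lhs: "fps_deriv (f1 n) $ j = (if coprime (Suc j) n then 1 else 0)"
      unfolding f1_def by (simp del: of_nat_Suc)
    have "sum hdd D $ j = (\<Sum>d\<in>D. if d dvd Suc j then real_of_int (moebius_mu d) else 0)"
      by (simp add: fps_sum_nth hdd_def)
    also have "\<dots> = (\<Sum>d\<in>{d \<in> D. d dvd Suc j}. real_of_int (moebius_mu d))"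
      by (rule sum.inter_filter[OF finD, symmetric])
    also have "{d \<in> D. d dvd Suc j} = {d. d dvd gcd (Suc j) n}"
      unfolding D_def by auto
    also have "(\<Sum>d\<in>{d. d dvd gcd (Suc j) n}. real_of_int (moebius_mu d))
        = real_of_int (\<Sum>d\<in>{d. d dvd gcd (Suc j) n}. moebius_mu d)" by simp
    also have "(\<Sum>d\<in>{d. d dvd gcd (Suc j) n}. moebius_mu d) = (if gcd (Suc j) n = 1 then 1 else 0)"
      by (rule moebius_sum) simp
    finally show "fps_deriv (f1 n) $ j = sum hdd D $ j"
      using lhs by (simp add: coprime_iff_gcd_eq_1)
  qed
  show ?thesis
    unfolding D_def[symmetric] P_def[symmetric]
    by (rule ode_unique[of _ "sum hdd D"]) (use dq fh q0 pr in auto)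
qed


lemma fps_nonneg_mult:
  fixes F G :: "real fps"
  assumes "\<And>i. F $ i \<ge> 0" "\<And>i. G $ i \<ge> 0"
  shows "(F * G) $ k \<ge> 0"
  unfolding fps_mult_nth using assms by (intro sum_nonneg mult_nonneg_nonneg) auto

lemma fps_nonneg_pow:
  fixes F :: "real fps"
  assumes "\<And>i. F $ i \<ge> 0"
  shows "(F ^ j) $ k \<ge> 0"
proof (induction j arbitrary: k)
  case 0 then show ?case by simp
next
  case (Suc j) then show ?case using fps_nonneg_mult[OF assms, of "F ^ j"] by simp
qed

lemma ps_mult:
  fixes F G :: "real fps"
  assumes F: "\<And>i. F $ i \<ge> 0" and G: "\<And>i. G $ i \<ge> 0"
  shows "(\<Sum>k\<le>N. (F * G) $ k) \<le> (\<Sum>i\<le>N. F $ i) * (\<Sum>j\<le>N. G $ j)"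
proof -
  have "(\<Sum>k\<le>N. (F * G) $ k) = (\<Sum>k\<le>N. \<Sum>i\<le>k. F $ i * G $ (k - i))"
    by (simp add: fps_mult_nth atLeast0AtMost)
  also have "\<dots> = (\<Sum>(i, j)\<in>{(i, j). i + j \<le> N}. F $ i * G $ j)"
    by (rule sum.triangle_reindex_eq[symmetric])
  also have "\<dots> \<le> (\<Sum>(i, j)\<in>{..N} \<times> {..N}. F $ i * G $ j)"
  proof (rule sum_mono2)
    show "finite ({..N} \<times> {..N})" by simp
    show "{(i, j). i + j \<le> N} \<subseteq> {..N} \<times> {..N}" by auto
    show "\<And>b. b \<in> {..N} \<times> {..N} - {(i, j). i + j \<le> N} \<Longrightarrow> 0 \<le> (case b of (i, j) \<Rightarrow> F $ i * G $ j)"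
      using F G by (auto intro: mult_nonneg_nonneg)
  qed
  also have "\<dots> = (\<Sum>i\<le>N. F $ i) * (\<Sum>j\<le>N. G $ j)"
    by (simp add: sum_product sum.cartesian_product)
  finally show ?thesis .
qed

lemma ps_pow:
  fixes F :: "real fps"
  assumes F: "\<And>i. F $ i \<ge> 0"
  shows "(\<Sum>k\<le>N. (F ^ j) $ k) \<le> (\<Sum>i\<le>N. F $ i) ^ j"
proof (induction j)
  case 0
  have "(\<Sum>k\<le>N. (1::real fps) $ k) = (\<Sum>k\<le>N. if k = 0 then 1 else 0)" by (rule sum.cong) auto
  also have "\<dots> = 1" by simp
  finally show ?case by simp
next
  case (Suc j)
  have "(\<Sum>k\<le>N. (F ^ Suc j) $ k) = (\<Sum>k\<le>N. (F * F ^ j) $ k)" by simp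
  also have "\<dots> \<le> (\<Sum>i\<le>N. F $ i) * (\<Sum>k\<le>N. (F ^ j) $ k)"
    by (rule ps_mult[OF F fps_nonneg_pow[OF F]])
  also have "\<dots> \<le> (\<Sum>i\<le>N. F $ i) * (\<Sum>i\<le>N. F $ i) ^ j"
    using Suc F by (intro mult_left_mono) (auto intro: sum_nonneg)
  finally show ?case by simp
qed

lemma exp_partial: assumes "x \<ge> 0" shows "(\<Sum>j\<le>N. x ^ j / fact j) \<le> exp (x::real)"
proof -
  have s: "(\<lambda>j. x ^ j / fact j) sums exp x" using exp_converges[of x] by (simp add: divide_inverse mult.commute)
  have "(\<Sum>j\<le>N. x ^ j / fact j) \<le> suminf (\<lambda>j. x ^ j / fact j)"
    by (rule sum_le_suminf[OF sums_summable[OF s]]) (use assms in auto)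
  also have "\<dots> = exp x" using sums_unique[OF s] by simp
  finally show ?thesis .
qed

lemma exp_of_partial:
  fixes f :: "real fps"
  assumes f: "\<And>i. f $ i \<ge> 0" and S: "(\<Sum>i\<le>N. f $ i) \<le> S"
  shows "(\<Sum>i\<le>N. fps_exp_of f $ i) \<le> exp S"
proof -
  have S0: "S \<ge> 0" using S f by (meson order_trans sum_nonneg)
  have "(\<Sum>i\<le>N. fps_exp_of f $ i) = (\<Sum>i\<le>N. \<Sum>j\<le>i. (f ^ j) $ i / fact j)"
    unfolding fps_exp_of_def fps_compose_nth by (simp add: atLeast0AtMost)
  also have "\<dots> \<le> (\<Sum>i\<le>N. \<Sum>j\<le>N. (f ^ j) $ i / fact j)"
    by (intro sum_mono sum_mono2) (auto intro!: divide_nonneg_nonneg fps_nonneg_pow[OF f])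
  also have "\<dots> = (\<Sum>j\<le>N. (\<Sum>i\<le>N. (f ^ j) $ i) / fact j)"
    by (subst sum.swap) (simp add: sum_divide_distrib)
  also have "\<dots> \<le> (\<Sum>j\<le>N. S ^ j / fact j)"
  proof (rule sum_mono)
    fix j assume "j \<in> {..N}"
    have "(\<Sum>i\<le>N. (f ^ j) $ i) \<le> (\<Sum>i\<le>N. f $ i) ^ j" by (rule ps_pow[OF f])
    also have "\<dots> \<le> S ^ j" using S f by (intro power_mono) (auto intro: sum_nonneg)
    finally show "(\<Sum>i\<le>N. (f ^ j) $ i) / fact j \<le> S ^ j / fact j"
      by (intro divide_right_mono) auto
  qed
  also have "\<dots> \<le> exp S" by (rule exp_partial[OF S0])
  finally show ?thesis .
qed

lemma exp_of_nonneg: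
  fixes f :: "real fps"
  assumes f: "\<And>i. f $ i \<ge> 0"
  shows "fps_exp_of f $ i \<ge> 0"
  unfolding fps_exp_of_def fps_compose_nth using fps_nonneg_pow[OF f]
  by (intro sum_nonneg mult_nonneg_nonneg) auto

lemma inv_sq_sum: "N \<ge> 1 \<Longrightarrow> (\<Sum>i=1..N. 1 / (real i)^2) \<le> 2 - 1 / real N"
proof (induction N rule: dec_induct)
  case base then show ?case by simp
next
  case (step N)
  have "(\<Sum>i=1..Suc N. 1 / (real i)^2) = (\<Sum>i=1..N. 1 / (real i)^2) + 1 / (real (Suc N))^2" by simp
  also have "\<dots> \<le> 2 - 1 / real N + 1 / (real (Suc N))^2" using step by simp
  also have "\<dots> \<le> 2 - 1 / real (Suc N)"
  proof -
    have N: "real N \<ge> 1" using step by simp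
    have eq: "1 / real N - 1 / real (Suc N) = 1 / (real N * real (Suc N))"
      using N by (simp add: field_simps)
    have "real N * real (Suc N) \<le> (real (Suc N))^2" unfolding power2_eq_square
      by (intro mult_right_mono) auto
    then have "1 / (real (Suc N))^2 \<le> 1 / (real N * real (Suc N))"
      using N by (intro divide_left_mono) auto
    then have "1 / (real (Suc N))^2 \<le> 1 / real N - 1 / real (Suc N)" using eq by simp
    then show ?thesis by simp
  qed
  finally show ?case .
qed


lemma b_nonneg: "f2 n $ m \<ge> 0"
  unfolding f2_def by (simp add: sum_nonneg)

lemma b_bound:
  assumes n: "n > 0" and m: "m \<ge> 1"
  shows "f2 n $ m \<le> real n ^ 3 / (real m)^2"
proof -
  define R where "R = {r. 1 \<le> r \<and> r \<le> m \<and> gcd r n > 1 \<and> r * dn n r = m}"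
  have fR: "finite R" unfolding R_def by (rule finite_subset[of _ "{..m}"]) auto
  have Rsub: "R \<subseteq> (\<lambda>d. m div d) ` {1..n}"
  proof
    fix r assume "r \<in> R"
    then have r: "r * dn n r = m" unfolding R_def by simp
    have "dn n r > 0" "dn n r dvd n" using dn_props[OF n] by auto
    then have "dn n r \<in> {1..n}" using n by (auto simp: dvd_imp_le)
    moreover have "r = m div dn n r" using r \<open>dn n r > 0\<close> by auto
    ultimately show "r \<in> (\<lambda>d. m div d) ` {1..n}" by blast
  qed
  have cR: "card R \<le> n"
  proof -
    have "card R \<le> card ((\<lambda>d. m div d) ` {1..n})" by (rule card_mono[OF _ Rsub]) simp
    also have "\<dots> \<le> card {1..n}" by (rule card_image_le) simp
    finally show ?thesis by simp
  qed
  have each: "1 / (real r)^2 \<le> (real n)^2 / (real m)^2" if "r \<in> R" for r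
  proof -
    have r: "r * dn n r = m" "1 \<le> r" using that unfolding R_def by auto
    have "dn n r \<le> n" using dn_props[OF n, of r] n by (simp add: dvd_imp_le)
    then have "m \<le> r * n" using r by (metis mult_le_mono2)
    then have "real m \<le> real r * real n" by (metis of_nat_mono of_nat_mult)
    then have "(real m)^2 \<le> (real r * real n)^2" using m by (intro power_mono) auto
    then have "(real m)^2 \<le> (real r)^2 * (real n)^2" by (simp add: power_mult_distrib)
    then show ?thesis using r m by (simp add: field_simps)
  qed
  have "f2 n $ m = (\<Sum>r\<in>R. 1 / (real r)^2)" unfolding f2_def R_def by simp
  also have "\<dots> \<le> real (card R) * ((real n)^2 / (real m)^2)" by (rule sum_bounded_above[OF each])
  also have "\<dots> \<le> real n * ((real n)^2 / (real m)^2)" using cR by (intro mult_right_mono) auto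
  also have "\<dots> = real n ^ 3 / (real m)^2" by (simp add: power3_eq_cube power2_eq_square)
  finally show ?thesis .
qed

lemma b_sum:
  assumes n: "n > 0"
  shows "(\<Sum>i\<le>N. f2 n $ i) \<le> 2 * real n ^ 3"
proof -
  have "(\<Sum>i\<le>N. f2 n $ i) = (\<Sum>i=1..N. f2 n $ i)"
  proof -
    have "{..N} = insert 0 {1..N}" by auto
    then show ?thesis using f2_0[of n] by simp
  qed
  also have "\<dots> \<le> (\<Sum>i=1..N. real n ^ 3 * (1 / (real i)^2))"
    by (rule sum_mono) (use b_bound[OF n] in simp)
  also have "\<dots> = real n ^ 3 * (\<Sum>i=1..N. 1 / (real i)^2)" by (simp add: sum_distrib_left)
  also have "\<dots> \<le> real n ^ 3 * 2"
  proof (cases "N \<ge> 1")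
    case True
    then have "(\<Sum>i=1..N. 1 / (real i)^2) \<le> 2" using inv_sq_sum[OF True] by (smt (verit) divide_nonneg_nonneg of_nat_0_le_iff)
    then show ?thesis by (intro mult_left_mono) auto
  next
    case False then show ?thesis by simp
  qed
  finally show ?thesis by simp
qed

lemma q2_bound:
  assumes n: "n > 0"
  shows "\<exists>M. \<forall>m\<ge>1. q2 n $ m \<le> M / (real m)^2"
proof -
  define K where "K = real n ^ 3"
  have K1: "K \<ge> 1" unfolding K_def using n by simp
  define E where "E = exp (2 * K)"
  define \<epsilon> where "\<epsilon> = 1 / (16 * K)"
  define M where "M = 32 * K^2 * E"
  have \<epsilon>0: "\<epsilon> > 0" and \<epsilon>1: "\<epsilon> \<le> 1/2" unfolding \<epsilon>_def using K1 by auto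
  define c where "c i = q2 n $ i" for i
  define b where "b i = f2 n $ i" for i
  have b0: "b i \<ge> 0" for i unfolding b_def by (rule b_nonneg)
  have c0: "c i \<ge> 0" for i unfolding c_def q2_eq by (rule exp_of_nonneg[OF b_nonneg])
  have bK: "b j \<le> K / (real j)^2" if "j \<ge> 1" for j unfolding b_def K_def by (rule b_bound[OF n that])
  have bS: "(\<Sum>i\<le>N. b i) \<le> 2 * K" for N unfolding b_def K_def by (rule b_sum[OF n])
  have cE: "(\<Sum>i\<le>N. c i) \<le> E" for N
    unfolding c_def q2_eq E_def using exp_of_partial[OF b_nonneg bS[unfolded b_def]] .
  have rec: "real k * c k = (\<Sum>j=1..k. real j * b j * c (k - j))" if "k > 0" for k
  proof -
    have d2: "fps_deriv (q2 n) = fps_deriv (f2 n) * q2 n" unfolding q2_eq by (rule exp_of_deriv(1)[OF f2_0])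
    show ?thesis unfolding c_def b_def by (rule deriv_rec[OF d2 that])
  qed
  have main: "m \<ge> 1 \<Longrightarrow> c m \<le> M / (real m)^2" for m
  proof (induction m rule: less_induct)
    case (less m)
    have m1: "real m \<ge> 1" using less.prems by simp
    have tm: "real j * b j * c (m - j) \<le> (4 * \<epsilon> * M / real m) * b j + (K / (\<epsilon> * real m)) * c (m - j)"
      if j: "j \<in> {1..m}" for j
    proof -
      have j1: "real j \<ge> 1" using j by simp
      have nn1: "0 \<le> (4 * \<epsilon> * M / real m) * b j"
        using \<epsilon>0 b0 m1 K1 unfolding M_def E_def by (intro mult_nonneg_nonneg divide_nonneg_nonneg) auto
      have nn2: "0 \<le> (K / (\<epsilon> * real m)) * c (m - j)"
        using \<epsilon>0 c0 m1 K1 by (intro mult_nonneg_nonneg divide_nonneg_nonneg) auto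
      show ?thesis
      proof (cases "real j \<le> \<epsilon> * real m")
        case True
        have em: "\<epsilon> * real m \<le> (1/2) * real m" using \<epsilon>1 m1 by (intro mult_right_mono) auto
        have "real j < real m" using True em m1 by linarith
        then have i1: "m - j \<ge> 1" "m - j < m" using j by auto
        have IH: "c (m - j) \<le> M / (real (m - j))^2" using less.IH[OF i1(2) i1(1)] .
        have "real (m - j) = real m - real j" using i1 by (simp add: of_nat_diff)
        then have "real (m - j) \<ge> real m / 2" using True em by linarith
        then have "(real (m - j))^2 \<ge> (real m / 2)^2" using m1 by (intro power_mono) auto
        then have "M / (real (m - j))^2 \<le> M / (real m / 2)^2"
          using m1 K1 unfolding M_def E_def by (intro divide_left_mono) auto
        then have "M / (real (m - j))^2 \<le> M * 4 / (real m)^2" by (simp add: power_divide)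
        then have cle: "c (m - j) \<le> 4 * M / (real m)^2" using IH by (simp add: mult.commute)
        have "real j * b j * c (m - j) \<le> (\<epsilon> * real m) * b j * (4 * M / (real m)^2)"
          using True b0 c0 cle by (intro mult_mono) auto
        also have "\<dots> = (4 * \<epsilon> * M / real m) * b j" using m1 by (simp add: power2_eq_square)
        finally show ?thesis using nn2 by linarith
      next
        case False
        have "real j * b j \<le> real j * (K / (real j)^2)" using bK[of j] j j1 by (intro mult_left_mono) auto
        also have "\<dots> = K / real j" using j1 by (simp add: power2_eq_square)
        also have "\<dots> \<le> K / (\<epsilon> * real m)"
        proof -
          have "\<epsilon> * real m > 0" using \<epsilon>0 m1 by simp
          then show ?thesis using False K1 j1 \<epsilon>0 m1 by (intro divide_left_mono mult_pos_pos) auto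
        qed
        finally have "real j * b j * c (m - j) \<le> K / (\<epsilon> * real m) * c (m - j)"
          using c0 by (intro mult_right_mono) auto
        then show ?thesis using nn1 by linarith
      qed
    qed
    have "real m * c m = (\<Sum>j=1..m. real j * b j * c (m - j))" using rec less.prems by simp
    also have "\<dots> \<le> (\<Sum>j=1..m. (4 * \<epsilon> * M / real m) * b j + (K / (\<epsilon> * real m)) * c (m - j))"
      by (rule sum_mono) (rule tm)
    also have "\<dots> = (4 * \<epsilon> * M / real m) * (\<Sum>j=1..m. b j) + (K / (\<epsilon> * real m)) * (\<Sum>j=1..m. c (m - j))"
      by (simp add: sum.distrib sum_distrib_left)
    also have "\<dots> \<le> (4 * \<epsilon> * M / real m) * (2 * K) + (K / (\<epsilon> * real m)) * E"
    proof (rule add_mono)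
      have "(\<Sum>j=1..m. b j) \<le> (\<Sum>j\<le>m. b j)" by (rule sum_mono2) (auto simp: b0)
      also have "\<dots> \<le> 2 * K" by (rule bS)
      finally show "(4 * \<epsilon> * M / real m) * (\<Sum>j=1..m. b j) \<le> (4 * \<epsilon> * M / real m) * (2 * K)"
        using \<epsilon>0 m1 K1 unfolding M_def E_def by (intro mult_left_mono) auto
      have "(\<Sum>j=1..m. c (m - j)) \<le> (\<Sum>j=0..m. c (m - j))" by (rule sum_mono2) (auto simp: c0)
      also have "\<dots> = (\<Sum>i=0..m. c i)"
        using sum.atLeastAtMost_rev[of c 0 m] by simp
      also have "\<dots> \<le> E" using cE[of m] by (simp add: atLeast0AtMost)
      finally show "(K / (\<epsilon> * real m)) * (\<Sum>j=1..m. c (m - j)) \<le> (K / (\<epsilon> * real m)) * E"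
        using \<epsilon>0 m1 K1 by (intro mult_left_mono) auto
    qed
    also have "\<dots> = M / real m"
      unfolding M_def \<epsilon>_def using m1 K1 by (simp add: field_simps power2_eq_square)
    finally have "real m * c m \<le> M / real m" .
    then show ?case using m1 by (simp add: field_simps power2_eq_square)
  qed
  show ?thesis using main unfolding c_def by blast
qed

theorem part2:
  assumes n: "n > 0"
  shows "(\<lambda>m. fps_nth (q2 n) m) \<in> O(\<lambda>m. 1 / (real m)^2)"
proof -
  obtain M where M: "\<forall>m\<ge>1. q2 n $ m \<le> M / (real m)^2" using q2_bound[OF n] by blast
  have nn: "q2 n $ m \<ge> 0" for m unfolding q2_eq by (rule exp_of_nonneg[OF b_nonneg])
  show ?thesis
  proof (rule bigoI[where c=M])
    show "\<forall>\<^sub>F x in at_top. norm (q2 n $ x) \<le> M * norm (1 / (real x)^2)"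
      unfolding eventually_at_top_linorder
      by (rule exI[of _ 1]) (use M nn in auto)
  qed
qed


theorem mainTheorem6:
  fixes n :: nat
  assumes "n \<ge> 2"
  shows "p_series n \<preceq>\<^sub>f q1 n * q2 n
    \<and> (\<lambda>m. fps_nth (q2 n) m) \<in> O(\<lambda>m. 1 / (real m)^2)
    \<and> q1 n = (\<Prod>d\<in>{d. d dvd n}. fps_one_minus_Xpow_powr d (- real_of_int (moebius_mu d) / real d))"
proof -
  have n: "n > 0" using assms by simp
  show ?thesis using part1[OF n] part2[OF n] part3[OF n] by blast
qed

end
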